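(* Let $X,Y$ be compact metric spaces and $f:X\dashrightarrow Y$ a continuous open-dense defined map. 1) $f_*(SM^+(X))\subset SM^+(Y)$, and for $\mu\in SM^+(X)$ we have $f_*(\mu)(\pm1)=\mu(\pm1)$; in particular $\|f_*(\mu)\|=\|\mu\|$. 2) Let $Z$ be a compact metric space and $g:Y\dashrightarrow Z$ a continuous open-dense defined map, and suppose there is an open dense $U\subset\mathrm{OpenDom}(f)$ with $f(U)\subset\mathrm{OpenDom}(g)$; let $g\circ f$ denote the continuous open-dense defined map $U\to Z$, $x\mapsto g(f(x))$. Then $g_*f_*(\mu)\ge(g\circ f)_*(\mu)$ for all $\mu\in SM^+(X)$. If $f$ and $g$ are continuous maps defined on all of $X$ and $Y$, equality holds. 3) If $\mu_n\in SM^+(X)$ weakly converges to $\mu$ and $\nu$ is a weak cluster point of $f_*(\mu_n)$, then $\nu\le f_*(\mu)$. If $f$ is a continuous map defined on all of $X$, then $f_*(\mu_n)$ weakly converges to $f_*(\mu)$. 4) If $\mu$ is a finite positive Borel measure on $X$ with $\mu(I(f))=0$, then $f_*(\mu)$ is the usual pushforward measure, i.e. $f_*(\mu)(\varphi)=\int_{X\setminus I(f)}\varphi\circ f\,d\mu$. 5) For every $\mu\in SM^+(X)$, $f_*(\mu)=\sup_{\chi\in\mathcal{G}(\mu)}f_*(\chi)$, where $\mathcal{G}(\mu)$ is the set of finite positive Borel measures $\chi$ on $X$ with $\chi\le\mu$. 6) For all $\mu_1,\mu_2\in SM^+(X)$, $f_*(\mu_1+\mu_2)\ge f_*(\mu_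1)+f_*(\mu_2)$.
   Context: $C^0(X)$: real continuous functions with sup norm. A strong submeasure is a sub-linear and bounded map $\mu:C^0(X)\to\mathbb{R}$ (sub-linear: $\mu(\varphi_1+\varphi_2)\le\mu(\varphi_1)+\mu(\varphi_2)$, $\mu(\lambda\varphi)=\lambda\mu(\varphi)$ for $\lambda\ge0$; bounded: $|\mu(\varphi)|\le C\|\varphi\|_{L^\infty}$, with $\|\mu\|$ the least such $C$); it is positive if non-decreasing. $SM^+(X)$ denotes positive strong submeasures; finite positive Borel measures are elements of $SM^+(X)$ via integration. $\mu\le\nu$ means $\mu(\varphi)\le\nu(\varphi)$ for all $\varphi$, and suprema of families are taken pointwise. Weak convergence: $\sup_n\|\mu_n\|<\infty$ and $\mu_n(\varphi)\to\mu(\varphi)$ for all $\varphi$. A continuous open-dense defined map $f:X\dashrightarrow Y$ is a continuous map $f:\mathrm{OpenDom}(f)\to Y$ with $\mathrm{OpenDom}(f)\subset X$ open dense; $I(f)=X\setminus\mathrm{OpenDom}(f)$. For $U\subset X$ open dense and bounded $g:U\to\mathbb{R}$, $E(g)=g$ on $U$ and $E(g)(x)=\limsup_{y\in U,y\to x}g(y)$ for $x\notin U$. For $\varphi\in C^0(Y)$, $f^*(\varphi):=E(\varphi\circ f)$ (bounded upper-semicontinuous on $X$, with $U$ the domain of $f$). The pushforward of $\mu\in SM^+(X)$ is $f_*(\mu)(\varphi):=\inf\{\mu(\psi):\psi\in C^0(X),\ \psi\ge f^*(\varphi)\}$ for $\varphi\in C^0(Y)$. *)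

theory Defs
  imports "HOL-Analysis.Analysis" "HOL-Probability.Probability"
begin

text \<open>Compact metric spaces are modelled as types of class metric_space whose
  universe is compact. A (strong) submeasure
  is a map from real functions to reals; only its values on continuous functions matter.\<close>

definition cfun :: "('a::topological_space \<Rightarrow> real) \<Rightarrow> bool" where
  "cfun \<phi> \<longleftrightarrow> continuous_on UNIV \<phi>"

definition supnorm :: "('a \<Rightarrow> real) \<Rightarrow> real" where
  "supnorm \<phi> = (SUP x. \<bar>\<phi> x\<bar>)"

definition strong_submeasure :: "(('a::topological_space \<Rightarrow> real) \<Rightarrow> real) \<Rightarrow> bool" where
  "strong_submeasure \<mu> \<longleftrightarrow>
     (\<forall>\<phi>1 \<phi>2. cfun \<phi>1 \<and> cfun \<phi>2 \<longrightarrow> \<mu> (\<lambda>x. \<phi>1 x + \<phi>2 x) \<le> \<mu> \<phi>1 + \<mu> \<phi>2) \<and>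
     (\<forall>\<phi> (c::real). cfun \<phi> \<and> c \<ge> 0 \<longrightarrow> \<mu> (\<lambda>x. c * \<phi> x) = c * \<mu> \<phi>) \<and>
     (\<exists>C. \<forall>\<phi>. cfun \<phi> \<longrightarrow> \<bar>\<mu> \<phi>\<bar> \<le> C * supnorm \<phi>)"

definition positive_sm :: "(('a::topological_space \<Rightarrow> real) \<Rightarrow> real) \<Rightarrow> bool" where
  "positive_sm \<mu> \<longleftrightarrow> (\<forall>\<phi> \<psi>. cfun \<phi> \<and> cfun \<psi> \<and> (\<forall>x. \<phi> x \<le> \<psi> x) \<longrightarrow> \<mu> \<phi> \<le> \<mu> \<psi>)"

definition SMp :: "(('a::topological_space \<Rightarrow> real) \<Rightarrow> real) \<Rightarrow> bool" where
  "SMp \<mu> \<longleftrightarrow> strong_submeasure \<mu> \<and> positive_sm \<mu>"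

definition smnorm :: "(('a::topological_space \<Rightarrow> real) \<Rightarrow> real) \<Rightarrow> real" where
  "smnorm \<mu> = Inf {C. \<forall>\<phi>. cfun \<phi> \<longrightarrow> \<bar>\<mu> \<phi>\<bar> \<le> C * supnorm \<phi>}"

definition sm_le :: "(('a::topological_space \<Rightarrow> real) \<Rightarrow> real) \<Rightarrow> (('a \<Rightarrow> real) \<Rightarrow> real) \<Rightarrow> bool" where
  "sm_le \<mu> \<nu> \<longleftrightarrow> (\<forall>\<phi>. cfun \<phi> \<longrightarrow> \<mu> \<phi> \<le> \<nu> \<phi>)"

definition sm_weak_conv :: "(nat \<Rightarrow> ('a::topological_space \<Rightarrow> real) \<Rightarrow> real) \<Rightarrow> (('a \<Rightarrow> real) \<Rightarrow> real) \<Rightarrow> bool" where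
  "sm_weak_conv \<mu>s \<mu> \<longleftrightarrow> (\<exists>B. \<forall>n. smnorm (\<mu>s n) \<le> B) \<and>
     (\<forall>\<phi>. cfun \<phi> \<longrightarrow> (\<lambda>n. \<mu>s n \<phi>) \<longlonglongrightarrow> \<mu> \<phi>)"

definition weak_cluster_point :: "(nat \<Rightarrow> ('a::topological_space \<Rightarrow> real) \<Rightarrow> real) \<Rightarrow> (('a \<Rightarrow> real) \<Rightarrow> real) \<Rightarrow> bool" where
  "weak_cluster_point \<nu>s \<nu> \<longleftrightarrow> (\<exists>r. strict_mono r \<and> sm_weak_conv (\<nu>s \<circ> r) \<nu>)"

definition od_map :: "'a::topological_space set \<Rightarrow> ('a \<Rightarrow> 'b::topological_space) \<Rightarrow> bool" where
  "od_map D f \<longleftrightarrow> open D \<and> closure D = UNIV \<and> continuous_on D f"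

definition Ext :: "'a::metric_space set \<Rightarrow> ('a \<Rightarrow> real) \<Rightarrow> 'a \<Rightarrow> real" where
  "Ext U g x = (if x \<in> U then g x else (INF e\<in>{0<..}. SUP y\<in>U \<inter> ball x e. g y))"

definition pullback :: "'a::metric_space set \<Rightarrow> ('a \<Rightarrow> 'b) \<Rightarrow> ('b \<Rightarrow> real) \<Rightarrow> 'a \<Rightarrow> real" where
  "pullback D f \<phi> = Ext D (\<phi> \<circ> f)"

definition pushforward :: "'a::metric_space set \<Rightarrow> ('a \<Rightarrow> 'b) \<Rightarrow> (('a \<Rightarrow> real) \<Rightarrow> real) \<Rightarrow> ('b \<Rightarrow> real) \<Rightarrow> real" where
  "pushforward D f \<mu> \<phi> = Inf {\<mu> \<psi> | \<psi>. cfun \<psi> \<and> (\<forall>x. \<psi> x \<ge> pullback D f \<phi> x)}"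

definition meas_sm :: "'a::topological_space measure \<Rightarrow> ('a \<Rightarrow> real) \<Rightarrow> real" where
  "meas_sm M \<phi> = integral\<^sup>L M \<phi>"

definition fin_borel_measure :: "'a::topological_space measure \<Rightarrow> bool" where
  "fin_borel_measure M \<longleftrightarrow> sets M = sets borel \<and> finite_measure M"

definition Gset :: "(('a::topological_space \<Rightarrow> real) \<Rightarrow> real) \<Rightarrow> 'a measure set" where
  "Gset \<mu> = {K. fin_borel_measure K \<and> sm_le (meas_sm K) \<mu>}"

end

theory Submission
  imports Defs
begin


lemma cfun_const[simp]: "cfun (\<lambda>x. c)" unfolding cfun_def by simp
lemma cfun_add[intro]: "cfun f \<Longrightarrow> cfun g \<Longrightarrow> cfun (\<lambda>x. f x + g x)"
  unfolding cfun_def by (intro continuous_intros)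
lemma cfun_diff[intro]: "cfun f \<Longrightarrow> cfun g \<Longrightarrow> cfun (\<lambda>x. f x - g x)"
  unfolding cfun_def by (intro continuous_intros)
lemma cfun_mult[intro]: "cfun f \<Longrightarrow> cfun (\<lambda>x. c * f x)"
  unfolding cfun_def by (intro continuous_intros)
lemma cfun_uminus[intro]: "cfun f \<Longrightarrow> cfun (\<lambda>x. - f x)"
  unfolding cfun_def by (intro continuous_intros)
lemma cfun_comp: "continuous_on UNIV f \<Longrightarrow> cfun \<phi> \<Longrightarrow> cfun (\<lambda>x. \<phi> (f x))"
  unfolding cfun_def by (metis continuous_on_compose2 subset_UNIV)

lemma cfun_bounded:
  assumes "compact (UNIV::'a::metric_space set)" "cfun (\<phi>::'a \<Rightarrow> real)"
  shows "\<bar>\<phi> x\<bar> \<le> supnorm \<phi>"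
proof -
  have "compact (range \<phi>)" using assms unfolding cfun_def
    by (metis compact_continuous_image)
  then have "bounded (range \<phi>)" by (rule compact_imp_bounded)
  then obtain a where a: "\<And>y. \<bar>\<phi> y\<bar> \<le> a" unfolding bounded_real by auto
  have "bdd_above (range (\<lambda>x. \<bar>\<phi> x\<bar>))" apply (rule bdd_aboveI2) using a by blast
  then show ?thesis unfolding supnorm_def by (rule cSUP_upper[OF UNIV_I])
qed

lemma supnorm_nonneg:
  assumes "compact (UNIV::'a::metric_space set)" "cfun (\<phi>::'a \<Rightarrow> real)"
  shows "0 \<le> supnorm \<phi>"
  using cfun_bounded[OF assms, of undefined] by linarith

lemma supnorm_const[simp]: "supnorm (\<lambda>x. c) = \<bar>c\<bar>"
  unfolding supnorm_def by simp

section \<open>Submeasures\<close>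

context fixes \<mu> :: "('a::topological_space \<Rightarrow> real) \<Rightarrow> real" assumes sm: "SMp \<mu>"
begin
lemma sm_add: "cfun f \<Longrightarrow> cfun g \<Longrightarrow> \<mu> (\<lambda>x. f x + g x) \<le> \<mu> f + \<mu> g"
  using sm unfolding SMp_def strong_submeasure_def by blast
lemma sm_hom: "cfun f \<Longrightarrow> c \<ge> 0 \<Longrightarrow> \<mu> (\<lambda>x. c * f x) = c * \<mu> f"
  using sm unfolding SMp_def strong_submeasure_def by blast
lemma sm_mono: "cfun f \<Longrightarrow> cfun g \<Longrightarrow> (\<And>x. f x \<le> g x) \<Longrightarrow> \<mu> f \<le> \<mu> g"
  using sm unfolding SMp_def positive_sm_def by blast
lemma sm_zero: "\<mu> (\<lambda>x. 0) = 0"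
  using sm_hom[of "\<lambda>x. 0" 0] by simp
lemma sm_const: "c \<ge> 0 \<Longrightarrow> \<mu> (\<lambda>x. c) = c * \<mu> (\<lambda>x. 1)"
  using sm_hom[of "\<lambda>x. 1" c] by simp
lemma sm_nconst: "c \<ge> 0 \<Longrightarrow> \<mu> (\<lambda>x. - c) = c * \<mu> (\<lambda>x. -1)"
  using sm_hom[of "\<lambda>x. -1" c] by simp
end

definition qq :: "((('a::topological_space) \<Rightarrow> real) \<Rightarrow> real) \<Rightarrow> ('a \<Rightarrow> real) \<Rightarrow> real" where
  "qq \<mu> g = Inf {\<mu> \<psi> | \<psi>. cfun \<psi> \<and> (\<forall>x. \<psi> x \<ge> g x)}"

lemma pf_qq: "pushforward D f \<mu> \<phi> = qq \<mu> (pullback D f \<phi>)"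
  unfolding pushforward_def qq_def by simp

lemma qq_ge:
  fixes g :: "'a::topological_space \<Rightarrow> real"
  assumes "\<And>x. g x \<le> B" "\<And>\<psi>. cfun \<psi> \<Longrightarrow> (\<forall>x. \<psi> x \<ge> g x) \<Longrightarrow> c \<le> \<mu> \<psi>"
  shows "c \<le> qq \<mu> g"
  unfolding qq_def
proof (rule cInf_greatest)
  show "{\<mu> \<psi> |\<psi>. cfun \<psi> \<and> (\<forall>x. g x \<le> \<psi> x)} \<noteq> {}"
    using assms(1) by (auto intro!: exI[of _ "\<lambda>x. B"])
qed (use assms in auto)

context fixes \<mu> :: "('a::metric_space \<Rightarrow> real) \<Rightarrow> real" assumes sm: "SMp \<mu>"
begin

lemma qq_le:
  assumes "cfun \<psi>" "\<And>x. g x \<le> \<psi> x" "\<And>x. - B \<le> g x"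
  shows "qq \<mu> g \<le> \<mu> \<psi>"
  unfolding qq_def
proof (rule cInf_lower)
  show "\<mu> \<psi> \<in> {\<mu> \<psi> |\<psi>. cfun \<psi> \<and> (\<forall>x. g x \<le> \<psi> x)}" using assms by auto
  show "bdd_below {\<mu> \<psi> |\<psi>. cfun \<psi> \<and> (\<forall>x. g x \<le> \<psi> x)}"
  proof (rule bdd_belowI)
    fix y assume "y \<in> {\<mu> \<psi> |\<psi>. cfun \<psi> \<and> (\<forall>x. g x \<le> \<psi> x)}"
    then obtain \<psi>' where "y = \<mu> \<psi>'" "cfun \<psi>'" "\<forall>x. g x \<le> \<psi>' x" by auto
    moreover have "\<And>x. - B \<le> \<psi>' x" using assms(3) \<open>\<forall>x. g x \<le> \<psi>' x\<close> by (meson order_trans)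
    ultimately show "\<mu> (\<lambda>x. - B) \<le> y" using sm_mono[OF sm, of "\<lambda>x. - B" \<psi>'] by simp
  qed
qed

lemma qq_cont:
  assumes "compact (UNIV::'a set)" and "cfun (g::'a\<Rightarrow>real)"
  shows "qq \<mu> g = \<mu> g"
proof (rule antisym)
  show "qq \<mu> g \<le> \<mu> g"
  proof (rule qq_le[of g g "supnorm g"])
    show "- supnorm g \<le> g x" for x using cfun_bounded[OF assms, of x] by linarith
  qed (use assms in auto)
  show "\<mu> g \<le> qq \<mu> g"
    using cfun_bounded[OF assms] sm_mono[OF sm] assms(2)
    by (intro qq_ge[of g "supnorm g"]) (auto simp: abs_le_iff)
qed

lemma qq_mono:
  assumes "\<And>x. g1 x \<le> g2 x" "\<And>x. \<bar>g1 x\<bar> \<le> B" "\<And>x. \<bar>g2 x\<bar> \<le> B"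
  shows "qq \<mu> g1 \<le> qq \<mu> g2"
proof (rule qq_ge[of g2 B])
  show "g2 x \<le> B" for x using assms(3)[of x] by linarith
  fix \<psi> assume "cfun \<psi>" "\<forall>x. g2 x \<le> \<psi> x"
  then show "qq \<mu> g1 \<le> \<mu> \<psi>"
  proof (intro qq_le[of \<psi> g1 B])
    show "- B \<le> g1 x" for x using assms(2)[of x] by linarith
  qed (use assms in \<open>auto intro: order_trans\<close>)
qed

lemma qq_add:
  assumes "\<And>x. \<bar>g1 x\<bar> \<le> B" "\<And>x. \<bar>g2 x\<bar> \<le> B"
  shows "qq \<mu> (\<lambda>x. g1 x + g2 x) \<le> qq \<mu> g1 + qq \<mu> g2"
proof -
  have lb: "- (B + B) \<le> g1 x + g2 x" for x using assms[of x] by (simp add: abs_le_iff)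
  have "qq \<mu> (\<lambda>x. g1 x + g2 x) - qq \<mu> g2 \<le> qq \<mu> g1"
  proof (rule qq_ge[of g1 B])
    show "g1 x \<le> B" for x using assms(1)[of x] by linarith
    fix \<psi>1 assume p1: "cfun \<psi>1" "\<forall>x. g1 x \<le> \<psi>1 x"
    have "qq \<mu> (\<lambda>x. g1 x + g2 x) - \<mu> \<psi>1 \<le> qq \<mu> g2"
    proof (rule qq_ge[of g2 B])
      show "g2 x \<le> B" for x using assms(2)[of x] by linarith
      fix \<psi>2 assume p2: "cfun \<psi>2" "\<forall>x. g2 x \<le> \<psi>2 x"
      have "qq \<mu> (\<lambda>x. g1 x + g2 x) \<le> \<mu> (\<lambda>x. \<psi>1 x + \<psi>2 x)"
        using p1 p2 lb by (intro qq_le[of _ _ "B+B"]) (auto intro: add_mono)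
      also have "\<dots> \<le> \<mu> \<psi>1 + \<mu> \<psi>2" using sm_add[OF sm] p1 p2 by blast
      finally show "qq \<mu> (\<lambda>x. g1 x + g2 x) - \<mu> \<psi>1 \<le> \<mu> \<psi>2" by simp
    qed
    then show "qq \<mu> (\<lambda>x. g1 x + g2 x) - qq \<mu> g2 \<le> \<mu> \<psi>1" by simp
  qed
  then show ?thesis by simp
qed

lemma qq_hom_pos:
  assumes "c > 0" "\<And>x. \<bar>g x\<bar> \<le> B"
  shows "qq \<mu> (\<lambda>x. c * g x) = c * qq \<mu> g"
proof (rule antisym)
  have "qq \<mu> (\<lambda>x. c * g x) / c \<le> qq \<mu> g"
  proof (rule qq_ge[of g B])
    show "g x \<le> B" for x using assms(2)[of x] by linarith
    fix \<psi> assume p: "cfun \<psi>" "\<forall>x. g x \<le> \<psi> x"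
    have "qq \<mu> (\<lambda>x. c * g x) \<le> \<mu> (\<lambda>x. c * \<psi> x)"
    proof (rule qq_le[of _ _ "c * B"])
      show "- (c * B) \<le> c * g x" for x using mult_left_mono[of "-B" "g x" c] assms(1) assms(2)[of x] by (simp add: abs_le_iff)
    qed (use p assms(1) in auto)
    also have "\<dots> = c * \<mu> \<psi>" using sm_hom[OF sm] p assms(1) by simp
    finally show "qq \<mu> (\<lambda>x. c * g x) / c \<le> \<mu> \<psi>" using assms(1) by (simp add: field_simps)
  qed
  then show "qq \<mu> (\<lambda>x. c * g x) \<le> c * qq \<mu> g" using assms(1) by (simp add: field_simps)
  show "c * qq \<mu> g \<le> qq \<mu> (\<lambda>x. c * g x)"
  proof (rule qq_ge[of _ "c * B"])
    show "c * g x \<le> c * B" for x using assms(2)[of x] assms(1) by (simp add: abs_le_iff)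
    fix \<psi> assume p: "cfun \<psi>" "\<forall>x. c * g x \<le> \<psi> x"
    have "qq \<mu> g \<le> \<mu> (\<lambda>x. (1/c) * \<psi> x)"
    proof (rule qq_le[of _ _ B])
      show "g x \<le> 1 / c * \<psi> x" for x using p(2) assms(1) by (simp add: field_simps)
      show "- B \<le> g x" for x using assms(2)[of x] by (simp add: abs_le_iff)
    qed (use p cfun_mult[of \<psi> "1/c"] in auto)
    also have "\<dots> = \<mu> \<psi> / c" using sm_hom[OF sm, of \<psi> "1/c"] p assms(1) by simp
    finally show "c * qq \<mu> g \<le> \<mu> \<psi>" using assms(1) by (simp add: field_simps)
  qed
qed

end


section \<open>The upper extension\<close>

lemma dense_near:
  assumes "closure U = UNIV" "e > 0"
  shows "\<exists>y\<in>U. dist x y < e"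
proof -
  have "x \<in> closure U" using assms(1) by simp
  then obtain y where "y \<in> U" "dist y x < e" using assms(2) closure_approachable by blast
  then show ?thesis by (auto simp: dist_commute)
qed

lemma Ext_facts:
  fixes U :: "'a::metric_space set" and k :: "'a \<Rightarrow> real"
  assumes dense: "closure U = UNIV" and bd: "\<forall>y\<in>U. \<bar>k y\<bar> \<le> B" and e: "e > 0"
  shows "U \<inter> ball x e \<noteq> {}" "bdd_above (k ` (U \<inter> ball x e))"
    "- B \<le> (SUP y\<in>U \<inter> ball x e. k y)"
proof -
  show ne: "U \<inter> ball x e \<noteq> {}"
  proof -
    obtain y where "y\<in>U" "dist x y < e" using dense_near[OF dense e] by blast
    then have "y \<in> U \<inter> ball x e" by (simp add: mem_ball)
    then show ?thesis by blast
  qed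
  show bda: "bdd_above (k ` (U \<inter> ball x e))"
    apply (rule bdd_aboveI2[where M=B]) using bd by (auto simp: abs_le_iff)
  from ne obtain y where y: "y \<in> U \<inter> ball x e" by blast
  have "- B \<le> k y" using bd y by (auto simp: abs_le_iff)
  also have "\<dots> \<le> (SUP y\<in>U \<inter> ball x e. k y)" by (rule cSUP_upper[OF y bda])
  finally show "- B \<le> (SUP y\<in>U \<inter> ball x e. k y)" .
qed

lemma Ext_bdd_below:
  fixes U :: "'a::metric_space set" and k :: "'a \<Rightarrow> real"
  assumes dense: "closure U = UNIV" and bd: "\<forall>y\<in>U. \<bar>k y\<bar> \<le> B"
  shows "bdd_below ((\<lambda>e. SUP y\<in>U \<inter> ball x e. k y) ` {0<..})"
  apply (rule bdd_belowI2[where m="-B"]) using Ext_facts(3)[OF dense bd] by auto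

lemma Ext_E1:
  fixes U :: "'a::metric_space set" and k :: "'a \<Rightarrow> real"
  assumes dense: "closure U = UNIV" and bd: "\<forall>y\<in>U. \<bar>k y\<bar> \<le> B"
    and x: "x \<notin> U" and eps: "\<epsilon> > 0"
  shows "\<exists>e>0. \<forall>y\<in>U. dist x y < e \<longrightarrow> k y \<le> Ext U k x + \<epsilon>"
proof -
  have E: "Ext U k x = (INF e\<in>{0<..}. SUP y\<in>U \<inter> ball x e. k y)" using x by (simp add: Ext_def)
  have ne0: "{0<..} \<noteq> ({}::real set)" using greaterThan_iff zero_less_one by blast
  have "(INF e\<in>{0<..}. SUP y\<in>U \<inter> ball x e. k y) < Ext U k x + \<epsilon>" using E eps by simp
  then obtain e where e: "e \<in> {0<..}" "(SUP y\<in>U \<inter> ball x e. k y) < Ext U k x + \<epsilon>"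
    using cINF_less_iff[OF ne0 Ext_bdd_below[OF dense bd]] by blast
  have "k y \<le> Ext U k x + \<epsilon>" if "y \<in> U" "dist x y < e" for y
  proof -
    have "k y \<le> (SUP y\<in>U \<inter> ball x e. k y)"
      using that Ext_facts(2)[OF dense bd, of e x] e(1) by (intro cSUP_upper) (auto simp: mem_ball)
    then show ?thesis using e(2) by linarith
  qed
  then show ?thesis using e(1) by auto
qed

lemma Ext_E2:
  fixes U :: "'a::metric_space set" and k :: "'a \<Rightarrow> real"
  assumes dense: "closure U = UNIV" and bd: "\<forall>y\<in>U. \<bar>k y\<bar> \<le> B"
    and x: "x \<notin> U"
    and H: "\<And>\<epsilon>. \<epsilon> > 0 \<Longrightarrow> \<exists>e>0. \<forall>y\<in>U. dist x y < e \<longrightarrow> k y \<le> c + \<epsilon>"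
  shows "Ext U k x \<le> c"
proof (rule field_le_epsilon)
  fix \<epsilon> :: real assume eps: "\<epsilon> > 0"
  obtain e where e: "e > 0" "\<forall>y\<in>U. dist x y < e \<longrightarrow> k y \<le> c + \<epsilon>" using H[OF eps] by blast
  have E: "Ext U k x = (INF e\<in>{0<..}. SUP y\<in>U \<inter> ball x e. k y)" using x by (simp add: Ext_def)
  have ne0: "{0<..} \<noteq> ({}::real set)" using greaterThan_iff zero_less_one by blast
  have "(INF e\<in>{0<..}. SUP y\<in>U \<inter> ball x e. k y) \<le> (SUP y\<in>U \<inter> ball x e. k y)"
    using Ext_bdd_below[OF dense bd] e(1) by (intro cINF_lower) auto
  also have "\<dots> \<le> c + \<epsilon>"
    using Ext_facts(1)[OF dense bd e(1)] e(2) by (intro cSUP_least) (auto simp: mem_ball)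
  finally show "Ext U k x \<le> c + \<epsilon>" using E by simp
qed

lemma Ext_ge_I:
  fixes U :: "'a::metric_space set" and k :: "'a \<Rightarrow> real"
  assumes dense: "closure U = UNIV" and bd: "\<forall>y\<in>U. \<bar>k y\<bar> \<le> B"
    and x: "x \<notin> U"
    and H: "\<And>e. e > 0 \<Longrightarrow> \<exists>y\<in>U. dist x y < e \<and> c \<le> k y"
  shows "c \<le> Ext U k x"
proof (rule field_le_epsilon)
  fix \<epsilon> :: real assume eps: "\<epsilon> > 0"
  obtain e where e: "e > 0" "\<forall>y\<in>U. dist x y < e \<longrightarrow> k y \<le> Ext U k x + \<epsilon>"
    using Ext_E1[OF dense bd x eps] by blast
  obtain y where "y \<in> U" "dist x y < e" "c \<le> k y" using H[OF e(1)] by blast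
  then show "c \<le> Ext U k x + \<epsilon>" using e(2) by fastforce
qed

lemma Ext_bnd:
  fixes U :: "'a::metric_space set" and k :: "'a \<Rightarrow> real"
  assumes dense: "closure U = UNIV" and bd: "\<forall>y\<in>U. \<bar>k y\<bar> \<le> B"
  shows "\<bar>Ext U k x\<bar> \<le> B"
proof (cases "x \<in> U")
  case True then show ?thesis using bd by (simp add: Ext_def)
next
  case False
  have "Ext U k x \<le> B"
    by (rule Ext_E2[OF dense bd False]) (use bd in \<open>auto simp: abs_le_iff intro!: exI[of _ 1]\<close>)
  moreover have "- B \<le> Ext U k x"
  proof (rule Ext_ge_I[OF dense bd False])
    fix e :: real assume "e > 0"
    then obtain y where "y \<in> U" "dist x y < e" using dense_near[OF dense] by blast
    moreover have "- B \<le> k y" using bd \<open>y \<in> U\<close> by (auto simp: abs_le_iff)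
    ultimately show "\<exists>y\<in>U. dist x y < e \<and> - B \<le> k y" by blast
  qed
  ultimately show ?thesis by simp
qed

lemma cfun_near:
  assumes "cfun (\<psi>::'a::metric_space \<Rightarrow> real)" "\<epsilon> > 0"
  shows "\<exists>d>0. \<forall>y. dist x y < d \<longrightarrow> \<bar>\<psi> y - \<psi> x\<bar> < \<epsilon>"
proof -
  have "continuous_on UNIV \<psi>" using assms(1) by (simp add: cfun_def)
  then obtain d where "d > 0" "\<forall>y\<in>UNIV. dist y x < d \<longrightarrow> dist (\<psi> y) (\<psi> x) < \<epsilon>"
    using assms(2) unfolding continuous_on_iff by blast
  then show ?thesis by (auto simp: dist_commute dist_real_def)
qed

lemma Ext_cont_le:
  fixes U :: "'a::metric_space set" and k :: "'a \<Rightarrow> real"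
  assumes dense: "closure U = UNIV" and bd: "\<forall>y\<in>U. \<bar>k y\<bar> \<le> B"
    and c: "cfun \<psi>" and le: "\<forall>y\<in>U. k y \<le> \<psi> y"
  shows "Ext U k x \<le> \<psi> x"
proof (cases "x \<in> U")
  case True then show ?thesis using le by (simp add: Ext_def)
next
  case False
  show ?thesis
  proof (rule Ext_E2[OF dense bd False])
    fix \<epsilon> :: real assume "\<epsilon> > 0"
    then obtain d where "d > 0" "\<forall>y. dist x y < d \<longrightarrow> \<bar>\<psi> y - \<psi> x\<bar> < \<epsilon>" using cfun_near[OF c] by blast
    then show "\<exists>e>0. \<forall>y\<in>U. dist x y < e \<longrightarrow> k y \<le> \<psi> x + \<epsilon>"
    proof (intro exI[of _ d] conjI ballI impI)
      fix y assume "y \<in> U" "dist x y < d"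
      then have "k y \<le> \<psi> y" "\<bar>\<psi> y - \<psi> x\<bar> < \<epsilon>" using le \<open>\<forall>y. dist x y < d \<longrightarrow> _\<close> by auto
      then show "k y \<le> \<psi> x + \<epsilon>" by linarith
    qed (use \<open>d > 0\<close> in auto)
  qed
qed

lemma Ext_cont_eq:
  fixes U :: "'a::metric_space set" and k :: "'a \<Rightarrow> real"
  assumes dense: "closure U = UNIV" and bd: "\<forall>y\<in>U. \<bar>k y\<bar> \<le> B"
    and c: "cfun \<psi>" and eq: "\<forall>y\<in>U. k y = \<psi> y"
  shows "Ext U k x = \<psi> x"
proof (cases "x \<in> U")
  case True then show ?thesis using eq by (simp add: Ext_def)
next
  case False
  have "Ext U k x \<le> \<psi> x" using Ext_cont_le[OF dense bd c] eq by simp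
  moreover have "\<psi> x \<le> Ext U k x"
  proof (rule field_le_epsilon)
    fix \<epsilon> :: real assume "\<epsilon> > 0"
    then obtain d where d: "d > 0" "\<forall>y. dist x y < d \<longrightarrow> \<bar>\<psi> y - \<psi> x\<bar> < \<epsilon>" using cfun_near[OF c] by blast
    have "\<psi> x - \<epsilon> \<le> Ext U k x"
    proof (rule Ext_ge_I[OF dense bd False])
      fix e :: real assume "e > 0"
      then obtain y where "y \<in> U" "dist x y < min e d" using dense_near[OF dense, of "min e d"] d(1) by auto
      then show "\<exists>y\<in>U. dist x y < e \<and> \<psi> x - \<epsilon> \<le> k y" using d eq
        by (intro bexI[of _ y]) (auto simp: abs_less_iff)
    qed
    then show "\<psi> x \<le> Ext U k x + \<epsilon>" by simp
  qed
  ultimately show ?thesis by simp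
qed

lemma Ext_add:
  fixes U :: "'a::metric_space set" and k1 k2 :: "'a \<Rightarrow> real"
  assumes dense: "closure U = UNIV" and bd1: "\<forall>y\<in>U. \<bar>k1 y\<bar> \<le> B1" and bd2: "\<forall>y\<in>U. \<bar>k2 y\<bar> \<le> B2"
  shows "Ext U (\<lambda>y. k1 y + k2 y) x \<le> Ext U k1 x + Ext U k2 x"
proof (cases "x \<in> U")
  case True then show ?thesis by (simp add: Ext_def)
next
  case False
  have bd: "\<forall>y\<in>U. \<bar>k1 y + k2 y\<bar> \<le> B1 + B2"
    using bd1 bd2 abs_triangle_ineq[of "k1 _" "k2 _"] by (meson add_mono order_trans)
  show ?thesis
  proof (rule Ext_E2[OF dense bd False])
    fix \<epsilon> :: real assume eps: "\<epsilon> > 0"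
    obtain e1 where e1: "e1 > 0" "\<forall>y\<in>U. dist x y < e1 \<longrightarrow> k1 y \<le> Ext U k1 x + \<epsilon>/2"
      using Ext_E1[OF dense bd1 False, of "\<epsilon>/2"] eps by auto
    obtain e2 where e2: "e2 > 0" "\<forall>y\<in>U. dist x y < e2 \<longrightarrow> k2 y \<le> Ext U k2 x + \<epsilon>/2"
      using Ext_E1[OF dense bd2 False, of "\<epsilon>/2"] eps by auto
    show "\<exists>e>0. \<forall>y\<in>U. dist x y < e \<longrightarrow> k1 y + k2 y \<le> Ext U k1 x + Ext U k2 x + \<epsilon>"
    proof (intro exI[of _ "min e1 e2"] conjI ballI impI)
      fix y assume "y \<in> U" "dist x y < min e1 e2"
      then have "k1 y \<le> Ext U k1 x + \<epsilon>/2" "k2 y \<le> Ext U k2 x + \<epsilon>/2" using e1 e2 by auto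
      then show "k1 y + k2 y \<le> Ext U k1 x + Ext U k2 x + \<epsilon>" by linarith
    qed (use e1 e2 in auto)
  qed
qed

lemma Ext_mono:
  fixes U :: "'a::metric_space set" and k1 k2 :: "'a \<Rightarrow> real"
  assumes dense: "closure U = UNIV" and bd1: "\<forall>y\<in>U. \<bar>k1 y\<bar> \<le> B1" and bd2: "\<forall>y\<in>U. \<bar>k2 y\<bar> \<le> B2"
    and le: "\<forall>y\<in>U. k1 y \<le> k2 y"
  shows "Ext U k1 x \<le> Ext U k2 x"
proof (cases "x \<in> U")
  case True then show ?thesis using le by (simp add: Ext_def)
next
  case False
  show ?thesis
  proof (rule Ext_E2[OF dense bd1 False])
    fix \<epsilon> :: real assume eps: "\<epsilon> > 0"
    obtain e where e: "e > 0" "\<forall>y\<in>U. dist x y < e \<longrightarrow> k2 y \<le> Ext U k2 x + \<epsilon>"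
      using Ext_E1[OF dense bd2 False eps] by auto
    then show "\<exists>e>0. \<forall>y\<in>U. dist x y < e \<longrightarrow> k1 y \<le> Ext U k2 x + \<epsilon>"
      using le by (intro exI[of _ e]) (auto intro: order_trans)
  qed
qed

lemma Ext_scale:
  fixes U :: "'a::metric_space set" and k :: "'a \<Rightarrow> real"
  assumes dense: "closure U = UNIV" and bd: "\<forall>y\<in>U. \<bar>k y\<bar> \<le> B" and c: "c > 0"
  shows "Ext U (\<lambda>y. c * k y) x = c * Ext U k x"
proof (cases "x \<in> U")
  case True then show ?thesis by (simp add: Ext_def)
next
  case False
  have bdc: "\<forall>y\<in>U. \<bar>c * k y\<bar> \<le> c * B" using bd c by (simp add: abs_mult)
  have "Ext U (\<lambda>y. c * k y) x \<le> c * Ext U k x"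
  proof (rule Ext_E2[OF dense bdc False])
    fix \<epsilon> :: real assume eps: "\<epsilon> > 0"
    obtain e where e: "e > 0" "\<forall>y\<in>U. dist x y < e \<longrightarrow> k y \<le> Ext U k x + \<epsilon>/c"
      using Ext_E1[OF dense bd False, of "\<epsilon>/c"] eps c by auto
    have "k y \<le> Ext U k x + \<epsilon>/c \<Longrightarrow> c * k y \<le> c * Ext U k x + \<epsilon>" for y
      using c by (simp add: field_simps)
    then show "\<exists>e>0. \<forall>y\<in>U. dist x y < e \<longrightarrow> c * k y \<le> c * Ext U k x + \<epsilon>"
      using e by blast
  qed
  moreover have "Ext U k x \<le> Ext U (\<lambda>y. c * k y) x / c"
  proof (rule Ext_E2[OF dense bd False])
    fix \<epsilon> :: real assume eps: "\<epsilon> > 0"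
    obtain e where e: "e > 0" "\<forall>y\<in>U. dist x y < e \<longrightarrow> c * k y \<le> Ext U (\<lambda>y. c * k y) x + c * \<epsilon>"
      using Ext_E1[OF dense bdc False, of "c * \<epsilon>"] eps c by auto
    have "c * k y \<le> Ext U (\<lambda>y. c * k y) x + c * \<epsilon> \<Longrightarrow> k y \<le> Ext U (\<lambda>y. c * k y) x / c + \<epsilon>" for y
      using c by (simp add: field_simps)
    then show "\<exists>e>0. \<forall>y\<in>U. dist x y < e \<longrightarrow> k y \<le> Ext U (\<lambda>y. c * k y) x / c + \<epsilon>"
      using e by blast
  qed
  then have "c * Ext U k x \<le> Ext U (\<lambda>y. c * k y) x" using c by (simp add: field_simps)
  ultimately show ?thesis by simp
qed


lemma sm_bound:
  fixes \<nu> :: "('a::metric_space \<Rightarrow> real) \<Rightarrow> real"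
  assumes cX: "compact (UNIV::'a set)"
    and hom: "\<forall>\<phi> c. cfun \<phi> \<and> c \<ge> 0 \<longrightarrow> \<nu> (\<lambda>x. c * \<phi> x) = c * \<nu> \<phi>"
    and pos: "positive_sm \<nu>" and c: "cfun \<phi>"
  shows "\<bar>\<nu> \<phi>\<bar> \<le> max \<bar>\<nu> (\<lambda>x. 1)\<bar> \<bar>\<nu> (\<lambda>x. -1)\<bar> * supnorm \<phi>"
proof -
  define s where "s = supnorm \<phi>"
  have s0: "s \<ge> 0" using supnorm_nonneg[OF cX c] s_def by simp
  have b: "\<bar>\<phi> x\<bar> \<le> s" for x using cfun_bounded[OF cX c] s_def by simp
  have h1: "\<nu> (\<lambda>x. s) = s * \<nu> (\<lambda>x. 1)" using hom[rule_format, of "\<lambda>x. 1" s] s0 by simp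
  have h2: "\<nu> (\<lambda>x. - s) = s * \<nu> (\<lambda>x. -1)" using hom[rule_format, of "\<lambda>x. -1" s] s0 by simp
  have P: "\<And>f g. cfun f \<Longrightarrow> cfun g \<Longrightarrow> (\<And>x. f x \<le> g x) \<Longrightarrow> \<nu> f \<le> \<nu> g"
    using pos unfolding positive_sm_def by blast
  have u: "\<nu> \<phi> \<le> \<nu> (\<lambda>x. s)"
  proof (rule P[OF c cfun_const])
    show "\<phi> x \<le> s" for x using b[of x] by linarith
  qed
  have l: "\<nu> (\<lambda>x. - s) \<le> \<nu> \<phi>"
  proof (rule P[OF cfun_const c])
    show "- s \<le> \<phi> x" for x using b[of x] by linarith
  qed
  define m where "m = max \<bar>\<nu> (\<lambda>x. 1)\<bar> \<bar>\<nu> (\<lambda>x. -1)\<bar>"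
  have m1: "\<nu> (\<lambda>x. 1) \<le> m" "- m \<le> \<nu> (\<lambda>x. -1)" unfolding m_def by auto
  have "s * \<nu> (\<lambda>x. 1) \<le> s * m"
    using s0 m1 by (intro mult_left_mono) auto
  moreover have "s * (- m) \<le> s * \<nu> (\<lambda>x. -1)"
    using s0 m1 by (intro mult_left_mono) auto
  ultimately have "\<nu> \<phi> \<le> m * s" "- (m * s) \<le> \<nu> \<phi>" using u l h1 h2
    by (simp_all add: algebra_simps)
  then show ?thesis unfolding m_def s_def by (simp add: abs_le_iff)
qed

lemma smnorm_eq:
  fixes \<nu> :: "('a::metric_space \<Rightarrow> real) \<Rightarrow> real"
  assumes cX: "compact (UNIV::'a set)"
    and hom: "\<forall>\<phi> c. cfun \<phi> \<and> c \<ge> 0 \<longrightarrow> \<nu> (\<lambda>x. c * \<phi> x) = c * \<nu> \<phi>"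
    and pos: "positive_sm \<nu>"
  shows "smnorm \<nu> = max \<bar>\<nu> (\<lambda>x. 1)\<bar> \<bar>\<nu> (\<lambda>x. -1)\<bar>"
  unfolding smnorm_def
proof (rule cInf_eq_minimum)
  show "max \<bar>\<nu> (\<lambda>x. 1)\<bar> \<bar>\<nu> (\<lambda>x. -1)\<bar> \<in> {C. \<forall>\<phi>. cfun \<phi> \<longrightarrow> \<bar>\<nu> \<phi>\<bar> \<le> C * supnorm \<phi>}"
    using sm_bound[OF cX hom pos] by auto
  fix C assume "C \<in> {C. \<forall>\<phi>. cfun \<phi> \<longrightarrow> \<bar>\<nu> \<phi>\<bar> \<le> C * supnorm \<phi>}"
  then have "\<bar>\<nu> (\<lambda>x. 1)\<bar> \<le> C * supnorm (\<lambda>x::'a. 1::real)" "\<bar>\<nu> (\<lambda>x. -1)\<bar> \<le> C * supnorm (\<lambda>x::'a. -1::real)"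
    by (auto simp del: supnorm_const)
  then show "max \<bar>\<nu> (\<lambda>x. 1)\<bar> \<bar>\<nu> (\<lambda>x. -1)\<bar> \<le> C" by simp
qed

lemma SMp_hom: "SMp \<mu> \<Longrightarrow> \<forall>\<phi> c. cfun \<phi> \<and> c \<ge> 0 \<longrightarrow> \<mu> (\<lambda>x. c * \<phi> x) = c * \<mu> \<phi>"
  by (simp add: sm_hom)
lemma SMp_pos: "SMp \<mu> \<Longrightarrow> positive_sm \<mu>"
  by (simp add: SMp_def)

lemma pullback_eq: "pullback D f \<phi> = Ext D (\<lambda>y. \<phi> (f y))"
  by (simp add: pullback_def o_def)

lemma od_dense: "od_map D f \<Longrightarrow> closure D = UNIV"
  by (simp add: od_map_def)

lemma pb_bd:
  fixes f :: "'a::metric_space \<Rightarrow> 'b::metric_space"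
  assumes "compact (UNIV::'b set)" "cfun \<phi>"
  shows "\<forall>y\<in>D. \<bar>\<phi> (f y)\<bar> \<le> supnorm \<phi>"
  using cfun_bounded[OF assms] by auto

lemma pb_bnd:
  fixes f :: "'a::metric_space \<Rightarrow> 'b::metric_space"
  assumes "closure D = UNIV" "compact (UNIV::'b set)" "cfun \<phi>"
  shows "\<bar>pullback D f \<phi> x\<bar> \<le> supnorm \<phi>"
  unfolding pullback_eq by (rule Ext_bnd[OF assms(1) pb_bd[OF assms(2,3)]])

lemma pb_const:
  fixes f :: "'a::metric_space \<Rightarrow> 'b::metric_space"
  assumes "closure D = UNIV"
  shows "pullback D f (\<lambda>x. c) = (\<lambda>x. c)"
  unfolding pullback_eq
  by (rule ext, rule Ext_cont_eq[OF assms, of _ "\<bar>c\<bar>"]) auto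

lemma part1:
  fixes D :: "'a::metric_space set" and f :: "'a \<Rightarrow> 'b::metric_space"
  assumes cX: "compact (UNIV :: 'a set)" and cY: "compact (UNIV :: 'b set)"
    and odf: "od_map D f" and sm: "SMp \<mu>"
  shows "SMp (pushforward D f \<mu>)" "pushforward D f \<mu> (\<lambda>_. 1) = \<mu> (\<lambda>_. 1)"
    "pushforward D f \<mu> (\<lambda>_. -1) = \<mu> (\<lambda>_. -1)" "smnorm (pushforward D f \<mu>) = smnorm \<mu>"
proof -
  have dense: "closure D = UNIV" using odf by (rule od_dense)
  have Pc: "pushforward D f \<mu> (\<lambda>_. c) = \<mu> (\<lambda>_. c)" for c
    unfolding pf_qq pb_const[OF dense] using qq_cont[OF sm cX] by simp
  then show P1: "pushforward D f \<mu> (\<lambda>_. 1) = \<mu> (\<lambda>_. 1)"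
    and P2: "pushforward D f \<mu> (\<lambda>_. -1) = \<mu> (\<lambda>_. -1)" by auto
  have bnd: "\<And>\<phi> x. cfun \<phi> \<Longrightarrow> \<bar>pullback D f \<phi> x\<bar> \<le> supnorm \<phi>"
    using pb_bnd[OF dense cY] by blast
  have sub: "pushforward D f \<mu> (\<lambda>x. \<phi>1 x + \<phi>2 x) \<le> pushforward D f \<mu> \<phi>1 + pushforward D f \<mu> \<phi>2"
    if c: "cfun \<phi>1" "cfun \<phi>2" for \<phi>1 \<phi>2
  proof -
    define s where "s = supnorm \<phi>1 + supnorm \<phi>2"
    have s1: "supnorm \<phi>1 \<ge> 0" "supnorm \<phi>2 \<ge> 0" using supnorm_nonneg[OF cY] c by auto
    have b1: "\<bar>pullback D f \<phi>1 x\<bar> \<le> s" "\<bar>pullback D f \<phi>2 x\<bar> \<le> s" for x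
      using bnd[OF c(1), of x] bnd[OF c(2), of x] s1 s_def by auto
    have bd12: "\<forall>y\<in>D. \<bar>\<phi>1 (f y) + \<phi>2 (f y)\<bar> \<le> s"
    proof
      fix y assume "y \<in> D"
      have "\<bar>\<phi>1 (f y)\<bar> \<le> supnorm \<phi>1" "\<bar>\<phi>2 (f y)\<bar> \<le> supnorm \<phi>2"
        using cfun_bounded[OF cY] c by auto
      then show "\<bar>\<phi>1 (f y) + \<phi>2 (f y)\<bar> \<le> s" unfolding s_def by linarith
    qed
    have b12: "\<bar>pullback D f (\<lambda>x. \<phi>1 x + \<phi>2 x) x\<bar> \<le> s + s" for x
    proof -
      have "\<bar>pullback D f (\<lambda>x. \<phi>1 x + \<phi>2 x) x\<bar> \<le> s"
        unfolding pullback_eq by (rule Ext_bnd[OF dense bd12])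
      then show ?thesis using s1 s_def by linarith
    qed
    have b3: "\<bar>pullback D f \<phi>1 x + pullback D f \<phi>2 x\<bar> \<le> s + s" for x
      using b1[of x] by linarith
    have "pullback D f (\<lambda>x. \<phi>1 x + \<phi>2 x) x \<le> pullback D f \<phi>1 x + pullback D f \<phi>2 x" for x
      unfolding pullback_eq by (rule Ext_add[OF dense pb_bd[OF cY c(1)] pb_bd[OF cY c(2)]])
    then have "qq \<mu> (pullback D f (\<lambda>x. \<phi>1 x + \<phi>2 x)) \<le> qq \<mu> (\<lambda>x. pullback D f \<phi>1 x + pullback D f \<phi>2 x)"
      using b12 b3 by (intro qq_mono[OF sm, of _ _ "s+s"])
    also have "\<dots> \<le> qq \<mu> (pullback D f \<phi>1) + qq \<mu> (pullback D f \<phi>2)"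
      using b1 by (intro qq_add[OF sm])
    finally show ?thesis unfolding pf_qq .
  qed
  have hom: "\<forall>\<phi> c. cfun \<phi> \<and> c \<ge> 0 \<longrightarrow> pushforward D f \<mu> (\<lambda>x. c * \<phi> x) = c * pushforward D f \<mu> \<phi>"
  proof (intro allI impI, elim conjE)
    fix \<phi> :: "'b \<Rightarrow> real" and c :: real assume c: "cfun \<phi>" "c \<ge> 0"
    show "pushforward D f \<mu> (\<lambda>x. c * \<phi> x) = c * pushforward D f \<mu> \<phi>"
    proof (cases "c = 0")
      case True
      then show ?thesis using Pc[of 0] sm_zero[OF sm] by simp
    next
      case False
      then have cp: "c > 0" using c by simp
      have "pullback D f (\<lambda>x. c * \<phi> x) = (\<lambda>x. c * pullback D f \<phi> x)"
        unfolding pullback_eq by (rule ext, rule Ext_scale[OF dense pb_bd[OF cY c(1)] cp])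
      then show ?thesis unfolding pf_qq using qq_hom_pos[OF sm cp bnd[OF c(1)]] by simp
    qed
  qed
  have pos: "positive_sm (pushforward D f \<mu>)"
    unfolding positive_sm_def
  proof (intro allI impI, elim conjE)
    fix \<phi> \<psi> :: "'b \<Rightarrow> real" assume c: "cfun \<phi>" "cfun \<psi>" "\<forall>x. \<phi> x \<le> \<psi> x"
    define s where "s = supnorm \<phi> + supnorm \<psi>"
    have s1: "supnorm \<phi> \<ge> 0" "supnorm \<psi> \<ge> 0" using supnorm_nonneg[OF cY] c by auto
    have b1: "\<bar>pullback D f \<phi> x\<bar> \<le> s" "\<bar>pullback D f \<psi> x\<bar> \<le> s" for x
      using bnd[OF c(1), of x] bnd[OF c(2), of x] s1 s_def by auto
    have "pullback D f \<phi> x \<le> pullback D f \<psi> x" for x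
      unfolding pullback_eq by (rule Ext_mono[OF dense pb_bd[OF cY c(1)] pb_bd[OF cY c(2)]]) (use c(3) in auto)
    then show "pushforward D f \<mu> \<phi> \<le> pushforward D f \<mu> \<psi>"
      unfolding pf_qq using b1 by (intro qq_mono[OF sm]) 
  qed
  show "SMp (pushforward D f \<mu>)"
    unfolding SMp_def strong_submeasure_def
  proof (intro conjI)
    show "\<forall>\<phi>1 \<phi>2. cfun \<phi>1 \<and> cfun \<phi>2 \<longrightarrow> pushforward D f \<mu> (\<lambda>x. \<phi>1 x + \<phi>2 x) \<le> pushforward D f \<mu> \<phi>1 + pushforward D f \<mu> \<phi>2"
      using sub by blast
    show "\<forall>\<phi> c. cfun \<phi> \<and> 0 \<le> c \<longrightarrow> pushforward D f \<mu> (\<lambda>x. c * \<phi> x) = c * pushforward D f \<mu> \<phi>"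
      using hom by blast
    show "\<exists>C. \<forall>\<phi>. cfun \<phi> \<longrightarrow> \<bar>pushforward D f \<mu> \<phi>\<bar> \<le> C * supnorm \<phi>"
      using sm_bound[OF cY hom pos] by blast
  qed (rule pos)
  show "smnorm (pushforward D f \<mu>) = smnorm \<mu>"
    unfolding smnorm_eq[OF cY hom pos] smnorm_eq[OF cX SMp_hom[OF sm] SMp_pos[OF sm]] P1 P2 ..
qed


lemma pb_univ: "pullback UNIV f \<phi> = (\<lambda>x. \<phi> (f x))"
  by (rule ext) (simp add: pullback_def Ext_def)

lemma part2_le:
  fixes D :: "'a::metric_space set" and f :: "'a \<Rightarrow> 'b::metric_space"
    and D2 :: "'b set" and g :: "'b \<Rightarrow> 'c::metric_space"
  assumes cX: "compact (UNIV :: 'a set)" and cY: "compact (UNIV :: 'b set)"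
    and cZ: "compact (UNIV :: 'c set)"
    and odf: "od_map D f" and odg: "od_map D2 g"
    and dU: "closure U = UNIV" and UD: "U \<subseteq> D" and fU: "f ` U \<subseteq> D2"
    and sm: "SMp \<mu>"
  shows "sm_le (pushforward U (g \<circ> f) \<mu>) (pushforward D2 g (pushforward D f \<mu>))"
  unfolding sm_le_def
proof (intro allI impI)
  fix \<phi> :: "'c \<Rightarrow> real" assume c: "cfun \<phi>"
  have dense: "closure D = UNIV" using odf by (rule od_dense)
  have dense2: "closure D2 = UNIV" using odg by (rule od_dense)
  have smn: "SMp (pushforward D f \<mu>)" by (rule part1(1)[OF cX cY odf sm])
  show "pushforward U (g \<circ> f) \<mu> \<phi> \<le> pushforward D2 g (pushforward D f \<mu>) \<phi>"
    unfolding pf_qq[of D2 g]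
  proof (rule qq_ge[of _ "supnorm \<phi>"])
    show "pullback D2 g \<phi> x \<le> supnorm \<phi>" for x using pb_bnd[OF dense2 cZ c, of g x] by linarith
    fix \<eta> assume ch: "cfun \<eta>" "\<forall>x. pullback D2 g \<phi> x \<le> \<eta> x"
    show "pushforward U (g \<circ> f) \<mu> \<phi> \<le> pushforward D f \<mu> \<eta>"
      unfolding pf_qq[of D f]
    proof (rule qq_ge[of _ "supnorm \<eta>"])
      show "pullback D f \<eta> x \<le> supnorm \<eta>" for x using pb_bnd[OF dense cY ch(1), of f x] by linarith
      fix \<psi> assume ps: "cfun \<psi>" "\<forall>x. pullback D f \<eta> x \<le> \<psi> x"
      show "pushforward U (g \<circ> f) \<mu> \<phi> \<le> \<mu> \<psi>"
        unfolding pf_qq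
      proof (rule qq_le[OF sm ps(1), of _ "supnorm \<phi>"])
        show "- supnorm \<phi> \<le> pullback U (g \<circ> f) \<phi> x" for x
          using pb_bnd[OF dU cZ c, of "g \<circ> f" x] by linarith
        have bdU: "\<forall>y\<in>U. \<bar>\<phi> ((g \<circ> f) y)\<bar> \<le> supnorm \<phi>" using pb_bd[OF cZ c] by blast
        show "pullback U (g \<circ> f) \<phi> x \<le> \<psi> x" for x
          unfolding pullback_eq
        proof (rule Ext_cont_le[OF dU bdU ps(1)], intro ballI)
          fix y assume y: "y \<in> U"
          then have yD: "y \<in> D" and fy: "f y \<in> D2" using UD fU by auto
          have "\<phi> (g (f y)) = pullback D2 g \<phi> (f y)" using fy by (simp add: pullback_def Ext_def)
          also have "\<dots> \<le> \<eta> (f y)" using ch(2) by blast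
          also have "\<dots> = pullback D f \<eta> y" using yD by (simp add: pullback_def Ext_def)
          also have "\<dots> \<le> \<psi> y" using ps(2) by blast
          finally show "\<phi> ((g \<circ> f) y) \<le> \<psi> y" by simp
        qed
      qed
    qed
  qed
qed

lemma part2_eq:
  fixes f :: "'a::metric_space \<Rightarrow> 'b::metric_space" and g :: "'b \<Rightarrow> 'c::metric_space"
  assumes cX: "compact (UNIV :: 'a set)" and cY: "compact (UNIV :: 'b set)"
    and cZ: "compact (UNIV :: 'c set)"
    and odf: "od_map UNIV f" and odg: "od_map UNIV g"
    and dU: "closure U = UNIV"
    and sm: "SMp \<mu>" and c: "cfun \<phi>"
  shows "pushforward UNIV g (pushforward UNIV f \<mu>) \<phi> = pushforward U (g \<circ> f) \<mu> \<phi>"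
proof -
  have fc: "continuous_on UNIV f" and gc: "continuous_on UNIV g" using odf odg by (auto simp: od_map_def)
  have smn: "SMp (pushforward UNIV f \<mu>)" by (rule part1(1)[OF cX cY odf sm])
  have c1: "cfun (\<lambda>y. \<phi> (g y))" using cfun_comp[OF gc c] .
  have c2: "cfun (\<lambda>x. \<phi> (g (f x)))" using cfun_comp[OF fc c1] .
  have "pushforward UNIV g (pushforward UNIV f \<mu>) \<phi> = pushforward UNIV f \<mu> (\<lambda>y. \<phi> (g y))"
    unfolding pf_qq[of UNIV g] pb_univ by (rule qq_cont[OF smn cY c1])
  also have "\<dots> = \<mu> (\<lambda>x. \<phi> (g (f x)))"
    unfolding pf_qq pb_univ by (rule qq_cont[OF sm cX c2])
  also have "\<dots> = pushforward U (g \<circ> f) \<mu> \<phi>"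
  proof -
    have bdU: "\<forall>y\<in>U. \<bar>\<phi> ((g \<circ> f) y)\<bar> \<le> supnorm \<phi>" using pb_bd[OF cZ c] by blast
    have "pullback U (g \<circ> f) \<phi> = (\<lambda>x. \<phi> (g (f x)))"
      unfolding pullback_eq by (rule ext, rule Ext_cont_eq[OF dU bdU c2]) simp
    then show ?thesis unfolding pf_qq using qq_cont[OF sm cX c2] by simp
  qed
  finally show ?thesis .
qed

lemma weak_bound:
  fixes \<mu>s :: "nat \<Rightarrow> ('a::metric_space \<Rightarrow> real) \<Rightarrow> real"
  assumes cX: "compact (UNIV :: 'a set)" and sms: "\<forall>n. SMp (\<mu>s n)"
    and B: "\<forall>n. smnorm (\<mu>s n) \<le> B" and c: "cfun \<phi>"
  shows "\<bar>\<mu>s n \<phi>\<bar> \<le> B * supnorm \<phi>"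
proof -
  have sm: "SMp (\<mu>s n)" using sms by blast
  have "\<bar>\<mu>s n \<phi>\<bar> \<le> smnorm (\<mu>s n) * supnorm \<phi>"
    unfolding smnorm_eq[OF cX SMp_hom[OF sm] SMp_pos[OF sm]]
    by (rule sm_bound[OF cX SMp_hom[OF sm] SMp_pos[OF sm] c])
  also have "\<dots> \<le> B * supnorm \<phi>"
    using B supnorm_nonneg[OF cX c] by (intro mult_right_mono) auto
  finally show ?thesis .
qed

lemma weak_lim_SMp:
  fixes \<mu>s :: "nat \<Rightarrow> ('a::metric_space \<Rightarrow> real) \<Rightarrow> real"
  assumes cX: "compact (UNIV :: 'a set)" and sms: "\<forall>n. SMp (\<mu>s n)"
    and wc: "sm_weak_conv \<mu>s \<mu>"
  shows "SMp \<mu>"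
proof -
  obtain B where B: "\<forall>n. smnorm (\<mu>s n) \<le> B" using wc unfolding sm_weak_conv_def by blast
  have L: "\<And>\<phi>. cfun \<phi> \<Longrightarrow> (\<lambda>n. \<mu>s n \<phi>) \<longlonglongrightarrow> \<mu> \<phi>" using wc unfolding sm_weak_conv_def by blast
  have sub: "\<mu> (\<lambda>x. \<phi>1 x + \<phi>2 x) \<le> \<mu> \<phi>1 + \<mu> \<phi>2" if c: "cfun \<phi>1" "cfun \<phi>2" for \<phi>1 \<phi>2
  proof (rule LIMSEQ_le[OF L tendsto_add[OF L L]])
    show "\<exists>N. \<forall>n\<ge>N. \<mu>s n (\<lambda>x. \<phi>1 x + \<phi>2 x) \<le> \<mu>s n \<phi>1 + \<mu>s n \<phi>2"
      using sm_add sms c by blast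
  qed (use c in auto)
  have hom: "\<mu> (\<lambda>x. c * \<phi> x) = c * \<mu> \<phi>" if c: "cfun \<phi>" "c \<ge> 0" for \<phi> c
  proof (rule LIMSEQ_unique[OF L])
    show "cfun (\<lambda>x. c * \<phi> x)" using c by blast
    have "(\<lambda>n. \<mu>s n (\<lambda>x. c * \<phi> x)) = (\<lambda>n. c * \<mu>s n \<phi>)" using sm_hom sms c by blast
    then show "(\<lambda>n. \<mu>s n (\<lambda>x. c * \<phi> x)) \<longlonglongrightarrow> c * \<mu> \<phi>" using tendsto_mult_left[OF L[OF c(1)]] by simp
  qed
  have pos: "\<mu> \<phi> \<le> \<mu> \<psi>" if c: "cfun \<phi>" "cfun \<psi>" "\<forall>x. \<phi> x \<le> \<psi> x" for \<phi> \<psi>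
  proof (rule LIMSEQ_le[OF L[OF c(1)] L[OF c(2)]])
    show "\<exists>N. \<forall>n\<ge>N. \<mu>s n \<phi> \<le> \<mu>s n \<psi>" using sm_mono sms c by blast
  qed
  have bd: "\<bar>\<mu> \<phi>\<bar> \<le> B * supnorm \<phi>" if c: "cfun \<phi>" for \<phi>
  proof (rule LIMSEQ_le_const2[OF tendsto_rabs[OF L[OF c]]])
    show "\<exists>N. \<forall>n\<ge>N. \<bar>\<mu>s n \<phi>\<bar> \<le> B * supnorm \<phi>" using weak_bound[OF cX sms B c] by blast
  qed
  show ?thesis unfolding SMp_def strong_submeasure_def positive_sm_def
    using sub hom pos bd by blast
qed

lemma part3:
  fixes D :: "'a::metric_space set" and f :: "'a \<Rightarrow> 'b::metric_space"
  assumes cX: "compact (UNIV :: 'a set)" and cY: "compact (UNIV :: 'b set)"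
    and odf: "od_map D f" and sms: "\<forall>n. SMp (\<mu>s n)" and wc: "sm_weak_conv \<mu>s \<mu>"
  shows "(\<forall>\<nu>. weak_cluster_point (\<lambda>n. pushforward D f (\<mu>s n)) \<nu> \<longrightarrow> sm_le \<nu> (pushforward D f \<mu>)) \<and>
        (D = UNIV \<longrightarrow> sm_weak_conv (\<lambda>n. pushforward D f (\<mu>s n)) (pushforward D f \<mu>))"
proof (intro conjI allI impI)
  have sm: "SMp \<mu>" by (rule weak_lim_SMp[OF cX sms wc])
  have dense: "closure D = UNIV" using odf by (rule od_dense)
  obtain B where B: "\<forall>n. smnorm (\<mu>s n) \<le> B" using wc unfolding sm_weak_conv_def by blast
  have L: "\<And>\<phi>. cfun \<phi> \<Longrightarrow> (\<lambda>n. \<mu>s n \<phi>) \<longlonglongrightarrow> \<mu> \<phi>" using wc unfolding sm_weak_conv_def by blast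
  fix \<nu> assume "weak_cluster_point (\<lambda>n. pushforward D f (\<mu>s n)) \<nu>"
  then obtain r where r: "strict_mono r" "sm_weak_conv ((\<lambda>n. pushforward D f (\<mu>s n)) \<circ> r) \<nu>"
    unfolding weak_cluster_point_def by blast
  show "sm_le \<nu> (pushforward D f \<mu>)" unfolding sm_le_def
  proof (intro allI impI)
    fix \<phi> :: "'b \<Rightarrow> real" assume c: "cfun \<phi>"
    have Lr: "(\<lambda>n. pushforward D f (\<mu>s (r n)) \<phi>) \<longlonglongrightarrow> \<nu> \<phi>"
      using r(2) c unfolding sm_weak_conv_def by (simp add: o_def)
    show "\<nu> \<phi> \<le> pushforward D f \<mu> \<phi>" unfolding pf_qq
    proof (rule qq_ge[of _ "supnorm \<phi>"])
      show "pullback D f \<phi> x \<le> supnorm \<phi>" for x using pb_bnd[OF dense cY c, of f x] by linarith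
      fix \<psi> assume ps: "cfun \<psi>" "\<forall>x. pullback D f \<phi> x \<le> \<psi> x"
      have Ls: "(\<lambda>n. \<mu>s (r n) \<psi>) \<longlonglongrightarrow> \<mu> \<psi>" using LIMSEQ_subseq_LIMSEQ[OF L[OF ps(1)] r(1)]
        by (simp add: o_def)
      show "\<nu> \<phi> \<le> \<mu> \<psi>"
      proof (rule LIMSEQ_le[OF Lr Ls], intro exI allI impI)
        fix n
        have smn: "SMp (\<mu>s (r n))" using sms by blast
        show "pushforward D f (\<mu>s (r n)) \<phi> \<le> \<mu>s (r n) \<psi>"
          unfolding pf_qq
        proof (rule qq_le[OF smn ps(1), of _ "supnorm \<phi>"])
          show "- supnorm \<phi> \<le> pullback D f \<phi> x" for x using pb_bnd[OF dense cY c, of f x] by linarith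
        qed (use ps in auto)
      qed
    qed
  qed
next
  have sm: "SMp \<mu>" by (rule weak_lim_SMp[OF cX sms wc])
  obtain B where B: "\<forall>n. smnorm (\<mu>s n) \<le> B" using wc unfolding sm_weak_conv_def by blast
  have L: "\<And>\<phi>. cfun \<phi> \<Longrightarrow> (\<lambda>n. \<mu>s n \<phi>) \<longlonglongrightarrow> \<mu> \<phi>" using wc unfolding sm_weak_conv_def by blast
  assume DU: "D = UNIV"
  have fc: "continuous_on UNIV f" using odf DU by (auto simp: od_map_def)
  show "sm_weak_conv (\<lambda>n. pushforward D f (\<mu>s n)) (pushforward D f \<mu>)"
    unfolding sm_weak_conv_def
  proof (intro conjI allI impI)
    show "\<exists>B. \<forall>n. smnorm (pushforward D f (\<mu>s n)) \<le> B"
      using part1(4)[OF cX cY odf] sms B by (intro exI[of _ B]) auto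
    fix \<phi> :: "'b \<Rightarrow> real" assume c: "cfun \<phi>"
    have c2: "cfun (\<lambda>x. \<phi> (f x))" using cfun_comp[OF fc c] .
    have "pushforward D f (\<mu>s n) \<phi> = \<mu>s n (\<lambda>x. \<phi> (f x))" for n
      unfolding pf_qq DU pb_univ using qq_cont[OF _ cX c2] sms by blast
    moreover have "pushforward D f \<mu> \<phi> = \<mu> (\<lambda>x. \<phi> (f x))"
      unfolding pf_qq DU pb_univ using qq_cont[OF sm cX c2] by blast
    ultimately show "(\<lambda>n. pushforward D f (\<mu>s n) \<phi>) \<longlonglongrightarrow> pushforward D f \<mu> \<phi>"
      using L[OF c2] by simp
  qed
qed

lemma part6:
  fixes D :: "'a::metric_space set" and f :: "'a \<Rightarrow> 'b::metric_space"
  assumes cY: "compact (UNIV :: 'b set)"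
    and odf: "od_map D f" and sm1: "SMp \<mu>1" and sm2: "SMp \<mu>2"
  shows "sm_le (\<lambda>\<phi>. pushforward D f \<mu>1 \<phi> + pushforward D f \<mu>2 \<phi>)
              (pushforward D f (\<lambda>\<phi>. \<mu>1 \<phi> + \<mu>2 \<phi>))"
  unfolding sm_le_def
proof (intro allI impI)
  fix \<phi> :: "'b \<Rightarrow> real" assume c: "cfun \<phi>"
  have dense: "closure D = UNIV" using odf by (rule od_dense)
  show "pushforward D f \<mu>1 \<phi> + pushforward D f \<mu>2 \<phi> \<le> pushforward D f (\<lambda>\<phi>. \<mu>1 \<phi> + \<mu>2 \<phi>) \<phi>"
    unfolding pf_qq
  proof (rule qq_ge[of _ "supnorm \<phi>"])
    show "pullback D f \<phi> x \<le> supnorm \<phi>" for x using pb_bnd[OF dense cY c, of f x] by linarith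
    fix \<psi> assume ps: "cfun \<psi>" "\<forall>x. pullback D f \<phi> x \<le> \<psi> x"
    have lb: "- supnorm \<phi> \<le> pullback D f \<phi> x" for x using pb_bnd[OF dense cY c, of f x] by linarith
    have "qq \<mu>1 (pullback D f \<phi>) \<le> \<mu>1 \<psi>" using ps lb by (intro qq_le[OF sm1 ps(1)]) auto
    moreover have "qq \<mu>2 (pullback D f \<phi>) \<le> \<mu>2 \<psi>" using ps lb by (intro qq_le[OF sm2 ps(1)]) auto
    ultimately show "qq \<mu>1 (pullback D f \<phi>) + qq \<mu>2 (pullback D f \<phi>) \<le> \<mu>1 \<psi> + \<mu>2 \<psi>" by simp
  qed
qed


lemma fbm_space: "fin_borel_measure M \<Longrightarrow> space M = UNIV"
  unfolding fin_borel_measure_def by (metis sets_eq_imp_space_eq space_borel)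

lemma fbm_meas:
  assumes "fin_borel_measure M" "cfun \<psi>"
  shows "\<psi> \<in> borel_measurable M"
proof -
  have "\<psi> \<in> borel_measurable borel" using assms(2) unfolding cfun_def by (rule borel_measurable_continuous_onI)
  moreover have "sets M = sets borel" using assms(1) by (simp add: fin_borel_measure_def)
  ultimately show ?thesis using measurable_cong_sets[of M borel borel borel] by simp
qed

lemma fbm_int:
  fixes M :: "'a::metric_space measure"
  assumes cX: "compact (UNIV::'a set)" and M: "fin_borel_measure M" and c: "cfun \<psi>"
  shows "integrable M \<psi>"
proof (rule finite_measure.integrable_const_bound[where B="supnorm \<psi>"])
  show "finite_measure M" using M by (simp add: fin_borel_measure_def)
  show "AE x in M. norm (\<psi> x) \<le> supnorm \<psi>" using cfun_bounded[OF cX c] by simp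
qed (rule fbm_meas[OF M c])

lemma meas_SMp:
  fixes M :: "'a::metric_space measure"
  assumes cX: "compact (UNIV::'a set)" and M: "fin_borel_measure M"
  shows "SMp (meas_sm M)"
  unfolding SMp_def strong_submeasure_def positive_sm_def meas_sm_def
proof (intro conjI allI impI; (elim conjE)?)
  fix \<phi>1 \<phi>2 :: "'a \<Rightarrow> real" assume "cfun \<phi>1" "cfun \<phi>2"
  then show "(LINT x|M. \<phi>1 x + \<phi>2 x) \<le> integral\<^sup>L M \<phi>1 + integral\<^sup>L M \<phi>2"
    using fbm_int[OF cX M] by (simp add: Bochner_Integration.integral_add)
next
  fix \<phi> :: "'a \<Rightarrow> real" and c :: real assume "cfun \<phi>"
  then show "(LINT x|M. c * \<phi> x) = c * integral\<^sup>L M \<phi>"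
    using fbm_int[OF cX M] by (simp add: Bochner_Integration.integral_mult_right)
next
  fix \<phi> \<psi> :: "'a \<Rightarrow> real" assume "cfun \<phi>" "cfun \<psi>" "\<forall>x. \<phi> x \<le> \<psi> x"
  then show "integral\<^sup>L M \<phi> \<le> integral\<^sup>L M \<psi>"
    using fbm_int[OF cX M] by (intro integral_mono) auto
next
  show "\<exists>C. \<forall>\<phi>. cfun \<phi> \<longrightarrow> \<bar>integral\<^sup>L M \<phi>\<bar> \<le> C * supnorm \<phi>"
  proof (intro exI allI impI)
    fix \<phi> :: "'a \<Rightarrow> real" assume c: "cfun \<phi>"
    have "\<bar>integral\<^sup>L M \<phi>\<bar> \<le> (LINT x|M. \<bar>\<phi> x\<bar>)"
      using integral_norm_bound[of M \<phi>] by simp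
    also have "\<dots> \<le> (LINT x|M. supnorm \<phi>)"
      using fbm_int[OF cX M] c cfun_bounded[OF cX c] by (intro integral_mono) auto
    also have "\<dots> = measure M UNIV * supnorm \<phi>" using fbm_space[OF M] by simp
    finally show "\<bar>integral\<^sup>L M \<phi>\<bar> \<le> measure M UNIV * supnorm \<phi>" .
  qed
qed

section \<open>Lipschitz upper approximations\<close>

definition lapp :: "('a::metric_space \<Rightarrow> real) \<Rightarrow> real \<Rightarrow> 'a \<Rightarrow> real" where
  "lapp h k x = (SUP y. h y - k * dist x y)"

context
  fixes h :: "'a::metric_space \<Rightarrow> real" and s k :: real
  assumes hb: "\<And>y. \<bar>h y\<bar> \<le> s" and k: "k \<ge> 0"
begin

lemma lapp_bdd: "bdd_above (range (\<lambda>y. h y - k * dist x y))"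
proof (rule bdd_aboveI2[where M=s])
  fix y show "h y - k * dist x y \<le> s" using hb[of y] k zero_le_dist[of x y]
    by (smt (verit) mult_nonneg_nonneg)
qed

lemma lapp_ge: "h x \<le> lapp h k x"
  unfolding lapp_def using cSUP_upper[of x UNIV "\<lambda>y. h y - k * dist x y"] lapp_bdd[of x] by simp

lemma lapp_le: "lapp h k x \<le> s"
  unfolding lapp_def
proof (rule cSUP_least)
  fix y show "h y - k * dist x y \<le> s" using hb[of y] k zero_le_dist[of x y]
    by (smt (verit) mult_nonneg_nonneg)
qed simp

lemma lapp_abs: "\<bar>lapp h k x\<bar> \<le> s"
  using lapp_ge[of x] lapp_le[of x] hb[of x] by (simp add: abs_le_iff)

lemma lapp_lip: "lapp h k x \<le> lapp h k x' + k * dist x x'"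
proof -
  have "lapp h k x - k * dist x x' \<le> lapp h k x'"
    unfolding lapp_def[of h k x]
  proof -
    have "(SUP y. h y - k * dist x y) \<le> lapp h k x' + k * dist x x'"
    proof (rule cSUP_least)
      fix y
      have "dist x' y \<le> dist x x' + dist x y" by (metis dist_commute dist_triangle)
      then have "k * dist x' y \<le> k * dist x x' + k * dist x y" using k
        by (metis distrib_left mult_left_mono)
      moreover have "h y - k * dist x' y \<le> lapp h k x'"
        unfolding lapp_def using cSUP_upper[of y UNIV "\<lambda>y. h y - k * dist x' y"] lapp_bdd[of x'] by simp
      ultimately show "h y - k * dist x y \<le> lapp h k x' + k * dist x x'" by linarith
    qed simp
    then show "(SUP y. h y - k * dist x y) - k * dist x x' \<le> lapp h k x'" by simp
  qed
  then show ?thesis by simp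
qed

lemma lapp_cont: "cfun (lapp h k)"
  unfolding cfun_def
proof (rule lipschitz_on_continuous_on)
  show "k-lipschitz_on UNIV (lapp h k)"
    unfolding lipschitz_on_def
  proof (intro conjI ballI)
    fix x y :: 'a
    show "dist (lapp h k x) (lapp h k y) \<le> k * dist x y"
      using lapp_lip[of x y] lapp_lip[of y x] by (simp add: dist_real_def dist_commute abs_le_iff)
  qed (rule k)
qed

end

lemma lapp_lim:
  fixes h :: "'a::metric_space \<Rightarrow> real"
  assumes hb: "\<And>y. \<bar>h y\<bar> \<le> s" and D: "open D" and x: "x \<in> D"
    and cont: "\<And>\<epsilon>. \<epsilon> > 0 \<Longrightarrow> \<exists>d>0. \<forall>y. dist x y < d \<longrightarrow> h y \<le> h x + \<epsilon>"
  shows "(\<lambda>n. lapp h (real n) x) \<longlonglongrightarrow> h x"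
  unfolding lim_sequentially
proof (intro allI impI)
  fix r :: real assume r: "r > 0"
  obtain d where d: "d > 0" "\<forall>y. dist x y < d \<longrightarrow> h y \<le> h x + r/2" using cont[of "r/2"] r by auto
  obtain N :: nat where N: "real N \<ge> 2 * s / d" using real_arch_simple by blast
  have s0: "s \<ge> 0" using hb[of x] by linarith
  show "\<exists>no. \<forall>n\<ge>no. dist (lapp h (real n) x) (h x) < r"
  proof (intro exI allI impI)
    fix n assume n: "N \<le> n"
    have nd: "real n * d \<ge> 2 * s"
    proof -
      have "real n \<ge> 2 * s / d" using N n by linarith
      then show ?thesis using d(1) by (simp add: field_simps)
    qed
    have "lapp h (real n) x \<le> h x + r/2"
      unfolding lapp_def
    proof (rule cSUP_least)
      fix y
      show "h y - real n * dist x y \<le> h x + r / 2"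
      proof (cases "dist x y < d")
        case True
        then show ?thesis using d(2) by (smt (verit) mult_nonneg_nonneg of_nat_0_le_iff zero_le_dist)
      next
        case False
        then have "real n * d \<le> real n * dist x y" by (intro mult_left_mono) auto
        then show ?thesis using nd hb[of x] hb[of y] r by (simp add: abs_le_iff)
      qed
    qed simp
    moreover have "h x \<le> lapp h (real n) x" using lapp_ge[of h s "real n" x, OF hb] by simp
    ultimately show "dist (lapp h (real n) x) (h x) < r" using r by (simp add: dist_real_def)
  qed
qed

lemma part4:
  fixes D :: "'a::metric_space set" and f :: "'a \<Rightarrow> 'b::metric_space"
  assumes cX: "compact (UNIV :: 'a set)" and cY: "compact (UNIV :: 'b set)"
    and odf: "od_map D f" and M: "fin_borel_measure M" and null: "emeasure M (UNIV - D) = 0"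
    and c: "cfun \<phi>"
  shows "pushforward D f (meas_sm M) \<phi> = (LINT x:D|M. \<phi> (f x))"
proof -
  have dense: "closure D = UNIV" and oD: "open D" and fc: "continuous_on D f"
    using odf by (auto simp: od_map_def)
  have sm: "SMp (meas_sm M)" by (rule meas_SMp[OF cX M])
  have sp: "space M = UNIV" by (rule fbm_space[OF M])
  have fm: "finite_measure M" using M by (simp add: fin_borel_measure_def)
  define s where "s = supnorm \<phi>"
  define h where "h = pullback D f \<phi>"
  define g where "g = (\<lambda>x. indicator D x *\<^sub>R \<phi> (f x))"
  have hb: "\<bar>h x\<bar> \<le> s" for x unfolding h_def s_def by (rule pb_bnd[OF dense cY c])
  have hD: "x \<in> D \<Longrightarrow> h x = \<phi> (f x)" for x by (simp add: h_def pullback_def Ext_def)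
  have phib: "\<bar>\<phi> y\<bar> \<le> s" for y unfolding s_def by (rule cfun_bounded[OF cY c])
  have AED: "AE x in M. x \<in> D"
  proof (rule AE_I'[of "UNIV - D"])
    have "UNIV - D \<in> sets M" using M oD by (auto simp: fin_borel_measure_def)
    then show "UNIV - D \<in> null_sets M" using null by (simp add: null_sets_def)
  qed (auto simp: sp)
  have gm: "g \<in> borel_measurable M"
  proof -
    have "continuous_on D (\<lambda>x. \<phi> (f x))"
      using c fc unfolding cfun_def by (metis continuous_on_compose2 subset_UNIV)
    then have "g \<in> borel_measurable borel" unfolding g_def
      using oD by (intro borel_measurable_continuous_on_indicator) auto
    moreover have "sets M = sets borel" using M by (simp add: fin_borel_measure_def)
    ultimately show ?thesis using measurable_cong_sets[of M borel borel borel] by simp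
  qed
  have gi: "integrable M g"
  proof (rule finite_measure.integrable_const_bound[OF fm _ gm, where B=s])
    show "AE x in M. norm (g x) \<le> s" using phib s_def supnorm_nonneg[OF cY c]
      by (auto simp: g_def indicator_def)
  qed
  have RHS: "(LINT x:D|M. \<phi> (f x)) = integral\<^sup>L M g" by (simp add: g_def set_lebesgue_integral_def)
  have ge: "integral\<^sup>L M g \<le> qq (meas_sm M) h"
  proof (rule qq_ge[of _ s])
    show "h x \<le> s" for x using hb[of x] by linarith
    fix \<psi> assume ps: "cfun \<psi>" "\<forall>x. h x \<le> \<psi> x"
    show "integral\<^sup>L M g \<le> meas_sm M \<psi>" unfolding meas_sm_def
    proof (rule integral_mono_AE[OF gi fbm_int[OF cX M ps(1)]])
      show "AE x in M. g x \<le> \<psi> x" using AED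
      proof (rule AE_mp, intro AE_I2 impI)
        fix x assume "x \<in> D"
        moreover have "h x \<le> \<psi> x" using ps(2) by blast
        ultimately show "g x \<le> \<psi> x" using hD[of x] by (simp add: g_def)
      qed
    qed
  qed
  have le: "qq (meas_sm M) h \<le> integral\<^sup>L M g"
  proof (rule LIMSEQ_le_const)
    have hk: "\<And>n. cfun (lapp h (real n))" using lapp_cont[of h s, OF hb] by simp
    have m1: "lapp h (real n) \<in> borel_measurable M" for n by (rule fbm_meas[OF M hk])
    have i1: "integrable M (\<lambda>x. s)" using fm by (simp add: finite_measure.integrable_const)
    have n1: "AE x in M. norm (lapp h (real n) x) \<le> s" for n using lapp_abs[of h s, OF hb] by simp
    have ae: "AE x in M. (\<lambda>i. lapp h (real i) x) \<longlonglongrightarrow> g x" using AED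
      proof (rule AE_mp, intro AE_I2 impI)
        fix x assume xD: "x \<in> D"
        have "(\<lambda>i. lapp h (real i) x) \<longlonglongrightarrow> h x"
        proof (rule lapp_lim[OF hb oD xD])
          fix \<epsilon> :: real assume e: "\<epsilon> > 0"
          have "continuous_on D (\<lambda>x. \<phi> (f x))"
            using c fc unfolding cfun_def by (metis continuous_on_compose2 subset_UNIV)
          then obtain d1 where d1: "d1 > 0" "\<forall>y\<in>D. dist y x < d1 \<longrightarrow> dist (\<phi> (f y)) (\<phi> (f x)) < \<epsilon>"
            using xD e unfolding continuous_on_iff by blast
          obtain d2 where d2: "d2 > 0" "ball x d2 \<subseteq> D" using oD xD open_contains_ball by meson
          show "\<exists>d>0. \<forall>y. dist x y < d \<longrightarrow> h y \<le> h x + \<epsilon>"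
          proof (intro exI[of _ "min d1 d2"] conjI allI impI)
            fix y assume y: "dist x y < min d1 d2"
            then have yD: "y \<in> D" using d2 by (auto simp: mem_ball)
            then have "dist (\<phi> (f y)) (\<phi> (f x)) < \<epsilon>" using d1 y by (auto simp: dist_commute)
            then show "h y \<le> h x + \<epsilon>" using hD[OF xD] hD[OF yD] by (simp add: dist_real_def)
          qed (use d1 d2 in auto)
        qed
        then show "(\<lambda>i. lapp h (real i) x) \<longlonglongrightarrow> g x" using hD[OF xD] xD by (simp add: g_def)
      qed
    show "(\<lambda>n. integral\<^sup>L M (lapp h (real n))) \<longlonglongrightarrow> integral\<^sup>L M g"
      by (rule integral_dominated_convergence[where w="\<lambda>x. s", OF gm m1 i1 ae n1])
    show "\<exists>N. \<forall>n\<ge>N. qq (meas_sm M) h \<le> integral\<^sup>L M (lapp h (real n))"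
    proof (intro exI allI impI)
      fix n :: nat
      show "qq (meas_sm M) h \<le> integral\<^sup>L M (lapp h (real n))"
      proof -
        have "- s \<le> h x" for x using hb[of x] by linarith
        then show ?thesis using qq_le[OF sm hk[of n], of h s] lapp_ge[of h s "real n", OF hb]
          by (simp add: meas_sm_def)
      qed
    qed
  qed
  show ?thesis unfolding pf_qq RHS h_def[symmetric] using le ge by simp
qed


section \<open>Hahn-Banach\<close>

definition lin_graph :: "('a \<Rightarrow> real) set \<Rightarrow> (('a \<Rightarrow> real) \<Rightarrow> real) \<Rightarrow> (('a \<Rightarrow> real) \<times> real) set \<Rightarrow> bool" where
  "lin_graph W p G \<longleftrightarrow> G \<noteq> {} \<and>
     (\<forall>x a. (x, a) \<in> G \<longrightarrow> x \<in> W \<and> a \<le> p x) \<and>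
     (\<forall>x a y b. (x, a) \<in> G \<longrightarrow> (y, b) \<in> G \<longrightarrow> ((\<lambda>t. x t + y t), a + b) \<in> G) \<and>
     (\<forall>x a c. (x, a) \<in> G \<longrightarrow> ((\<lambda>t. c * x t), c * a) \<in> G) \<and>
     (\<forall>x a b. (x, a) \<in> G \<longrightarrow> (x, b) \<in> G \<longrightarrow> a = b)"

locale hb_setup =
  fixes W :: "('a \<Rightarrow> real) set" and p :: "('a \<Rightarrow> real) \<Rightarrow> real"
  assumes W_add: "\<And>x y. x \<in> W \<Longrightarrow> y \<in> W \<Longrightarrow> (\<lambda>t. x t + y t) \<in> W"
    and W_scal: "\<And>x c. x \<in> W \<Longrightarrow> (\<lambda>t. c * x t) \<in> W"
    and p_add: "\<And>x y. x \<in> W \<Longrightarrow> y \<in> W \<Longrightarrow> p (\<lambda>t. x t + y t) \<le> p x + p y"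
    and p_hom: "\<And>x c. x \<in> W \<Longrightarrow> c > 0 \<Longrightarrow> p (\<lambda>t. c * x t) = c * p x"
begin

lemma lg_W: "lin_graph W p G \<Longrightarrow> (x, a) \<in> G \<Longrightarrow> x \<in> W"
  unfolding lin_graph_def by blast
lemma lg_p: "lin_graph W p G \<Longrightarrow> (x, a) \<in> G \<Longrightarrow> a \<le> p x"
  unfolding lin_graph_def by blast
lemma lg_add: "lin_graph W p G \<Longrightarrow> (x, a) \<in> G \<Longrightarrow> (y, b) \<in> G \<Longrightarrow> ((\<lambda>t. x t + y t), a + b) \<in> G"
  unfolding lin_graph_def by blast
lemma lg_scal: "lin_graph W p G \<Longrightarrow> (x, a) \<in> G \<Longrightarrow> ((\<lambda>t. c * x t), c * a) \<in> G"
  unfolding lin_graph_def by blast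
lemma lg_fun: "lin_graph W p G \<Longrightarrow> (x, a) \<in> G \<Longrightarrow> (x, b) \<in> G \<Longrightarrow> a = b"
  unfolding lin_graph_def by blast
lemma lg_zero: "lin_graph W p G \<Longrightarrow> ((\<lambda>t. 0), 0) \<in> G"
proof -
  assume G: "lin_graph W p G"
  then obtain x a where "(x, a) \<in> G" unfolding lin_graph_def by auto
  from lg_scal[OF G this, of 0] show ?thesis by simp
qed

lemma HB_ext:
  assumes G: "lin_graph W p G" and x0: "x0 \<in> W" and nx: "\<forall>a. (x0, a) \<notin> G"
  shows "\<exists>G'. lin_graph W p G' \<and> G \<subseteq> G' \<and> G' \<noteq> G"
proof -
  define S where "S = {a - p (\<lambda>t. y t + (-1) * x0 t) | y a. (y, a) \<in> G}"
  have key: "a1 - p (\<lambda>t. y1 t + (-1) * x0 t) \<le> p (\<lambda>t. y2 t + x0 t) - a2"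
    if "(y1, a1) \<in> G" "(y2, a2) \<in> G" for y1 a1 y2 a2
  proof -
    have W1: "y1 \<in> W" "y2 \<in> W" using that lg_W[OF G] by auto
    have A: "(\<lambda>t. y1 t + (-1) * x0 t) \<in> W" "(\<lambda>t. y2 t + x0 t) \<in> W"
      using W_add[OF W1(1) W_scal[OF x0, of "-1"]] W_add[OF W1(2) x0] by auto
    have "a1 + a2 \<le> p (\<lambda>t. y1 t + y2 t)" using lg_p[OF G lg_add[OF G that]] .
    also have "(\<lambda>t. y1 t + y2 t) = (\<lambda>t. (y1 t + (-1) * x0 t) + (y2 t + x0 t))" by auto
    also have "p \<dots> \<le> p (\<lambda>t. y1 t + (-1) * x0 t) + p (\<lambda>t. y2 t + x0 t)"
      using p_add[OF A] by simp
    finally show ?thesis by simp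
  qed
  have zG: "((\<lambda>t. 0), 0) \<in> G" by (rule lg_zero[OF G])
  have Sne: "S \<noteq> {}" using zG unfolding S_def by blast
  have Sbdd: "\<And>s. s \<in> S \<Longrightarrow> s \<le> p x0"
    using key[OF _ zG] unfolding S_def by auto
  define \<alpha> where "\<alpha> = Sup S"
  have \<alpha>_up: "a - p (\<lambda>t. y t + (-1) * x0 t) \<le> \<alpha>" if "(y, a) \<in> G" for y a
  proof -
    have "bdd_above S" using Sbdd by (rule bdd_aboveI)
    moreover have "a - p (\<lambda>t. y t + (-1) * x0 t) \<in> S" using that unfolding S_def by blast
    ultimately show ?thesis unfolding \<alpha>_def by (rule cSup_upper[rotated])
  qed
  have \<alpha>_low: "\<alpha> \<le> p (\<lambda>t. y t + x0 t) - a" if "(y, a) \<in> G" for y a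
    unfolding \<alpha>_def using Sne key[OF _ that] by (intro cSup_least) (auto simp: S_def)
  define G' where "G' = {((\<lambda>t. y t + c * x0 t), a + c * \<alpha>) | y a c. (y, a) \<in> G}"
  have G'I: "(X, v) \<in> G'" if "(y, a) \<in> G" "X = (\<lambda>t. y t + c * x0 t)" "v = a + c * \<alpha>" for X v y a c
    using that unfolding G'_def by blast
  have dom: "(\<lambda>t. y t + c * x0 t) \<in> W" if "(y, a) \<in> G" for y a c
    using lg_W[OF G that] x0 W_add W_scal by auto
  have dominate: "a + c * \<alpha> \<le> p (\<lambda>t. y t + c * x0 t)" if ya: "(y, a) \<in> G" for y a c
  proof -
    consider "c = 0" | "c > 0" | "c < 0" by linarith
    then show ?thesis
    proof cases
      case 1 then show ?thesis using lg_p[OF G ya] by simp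
    next
      case 2
      have "((\<lambda>t. (1/c) * y t), (1/c) * a) \<in> G" by (rule lg_scal[OF G ya])
      from \<alpha>_low[OF this] have "\<alpha> \<le> p (\<lambda>t. (1/c) * y t + x0 t) - a / c" by simp
      then have "c * \<alpha> \<le> c * p (\<lambda>t. (1/c) * y t + x0 t) - a"
        using 2 by (simp add: field_simps)
      also have "c * p (\<lambda>t. (1/c) * y t + x0 t) = p (\<lambda>t. c * ((1/c) * y t + x0 t))"
        using lg_W[OF G ya] by (intro p_hom[symmetric] W_add W_scal x0 2)
      also have "(\<lambda>t. c * ((1/c) * y t + x0 t)) = (\<lambda>t. y t + c * x0 t)"
        using 2 by (auto simp: field_simps)
      finally show ?thesis by simp
    next
      case 3
      define d where "d = - c"
      have d: "d > 0" using 3 d_def by simp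
      have "((\<lambda>t. (1/d) * y t), (1/d) * a) \<in> G" by (rule lg_scal[OF G ya])
      from \<alpha>_up[OF this] have "a / d - p (\<lambda>t. (1/d) * y t + (-1) * x0 t) \<le> \<alpha>" by simp
      then have "a - d * \<alpha> \<le> d * p (\<lambda>t. (1/d) * y t + (-1) * x0 t)"
        using d by (simp add: field_simps)
      also have "d * p (\<lambda>t. (1/d) * y t + (-1) * x0 t) = p (\<lambda>t. d * ((1/d) * y t + (-1) * x0 t))"
        using lg_W[OF G ya] by (intro p_hom[symmetric] W_add W_scal x0 d)
      also have "(\<lambda>t. d * ((1/d) * y t + (-1) * x0 t)) = (\<lambda>t. y t + c * x0 t)"
        using d d_def by (auto simp: field_simps)
      finally show ?thesis using d_def by simp
    qed
  qed
  have "lin_graph W p G'"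
    unfolding lin_graph_def
  proof (intro conjI allI impI)
    show "G' \<noteq> {}" using zG unfolding G'_def by blast
  next
    fix x a assume "(x, a) \<in> G'"
    then obtain y b c where "x = (\<lambda>t. y t + c * x0 t)" "a = b + c * \<alpha>" "(y, b) \<in> G"
      unfolding G'_def by blast
    then show "x \<in> W" "a \<le> p x" using dom dominate by auto
  next
    fix x a y b assume "(x, a) \<in> G'" "(y, b) \<in> G'"
    then obtain x1 a1 c1 y1 b1 c2 where
      e: "x = (\<lambda>t. x1 t + c1 * x0 t)" "a = a1 + c1 * \<alpha>" "(x1, a1) \<in> G"
         "y = (\<lambda>t. y1 t + c2 * x0 t)" "b = b1 + c2 * \<alpha>" "(y1, b1) \<in> G"
      unfolding G'_def by blast
    have "((\<lambda>t. x1 t + y1 t), a1 + b1) \<in> G" by (rule lg_add[OF G e(3) e(6)])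
    moreover have "(\<lambda>t. x t + y t) = (\<lambda>t. (x1 t + y1 t) + (c1 + c2) * x0 t)"
      using e by (auto simp: algebra_simps)
    moreover have "a + b = (a1 + b1) + (c1 + c2) * \<alpha>" using e by (simp add: algebra_simps)
    ultimately show "((\<lambda>t. x t + y t), a + b) \<in> G'" by (rule G'I)
  next
    fix x a k assume "(x, a) \<in> G'"
    then obtain x1 a1 c1 where
      e: "x = (\<lambda>t. x1 t + c1 * x0 t)" "a = a1 + c1 * \<alpha>" "(x1, a1) \<in> G"
      unfolding G'_def by blast
    have "((\<lambda>t. k * x1 t), k * a1) \<in> G" by (rule lg_scal[OF G e(3)])
    moreover have "(\<lambda>t. k * x t) = (\<lambda>t. k * x1 t + (k * c1) * x0 t)"
      using e by (auto simp: algebra_simps)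
    moreover have "k * a = k * a1 + (k * c1) * \<alpha>" using e by (simp add: algebra_simps)
    ultimately show "((\<lambda>t. k * x t), k * a) \<in> G'" by (rule G'I)
  next
    fix x a b assume "(x, a) \<in> G'" "(x, b) \<in> G'"
    then obtain x1 a1 c1 y1 b1 c2 where
      e: "x = (\<lambda>t. x1 t + c1 * x0 t)" "a = a1 + c1 * \<alpha>" "(x1, a1) \<in> G"
         "x = (\<lambda>t. y1 t + c2 * x0 t)" "b = b1 + c2 * \<alpha>" "(y1, b1) \<in> G"
      unfolding G'_def by blast
    have pt: "x1 t + c1 * x0 t = y1 t + c2 * x0 t" for t using e(1) e(4) by metis
    have c12: "c1 = c2"
    proof (rule ccontr)
      assume ne: "c1 \<noteq> c2"
      have "((\<lambda>t. (-1) * y1 t), (-1) * b1) \<in> G" by (rule lg_scal[OF G e(6)])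
      from lg_add[OF G e(3) this] have "((\<lambda>t. x1 t + (-1) * y1 t), a1 + (-1) * b1) \<in> G" .
      from lg_scal[OF G this, of "1 / (c2 - c1)"]
      have "((\<lambda>t. (1 / (c2 - c1)) * (x1 t + (-1) * y1 t)), (1 / (c2 - c1)) * (a1 + (-1) * b1)) \<in> G" .
      moreover have "(\<lambda>t. (1 / (c2 - c1)) * (x1 t + (-1) * y1 t)) = x0"
      proof
        fix t
        have "x1 t - y1 t = (c2 - c1) * x0 t" using pt[of t] by (simp add: algebra_simps)
        then show "(1 / (c2 - c1)) * (x1 t + (-1) * y1 t) = x0 t" using ne by (simp add: field_simps)
      qed
      ultimately show False using nx by simp
    qed
    have "x1 = y1" using pt c12 by auto
    then have "a1 = b1" using lg_fun[OF G e(3)] e(6) by simp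
    then show "a = b" using e c12 by simp
  qed
  moreover have "G \<subseteq> G'"
  proof
    fix z assume "z \<in> G"
    then obtain y a where z: "z = (y, a)" "(y, a) \<in> G" by (cases z) auto
    have "(y, a) = ((\<lambda>t. y t + 0 * x0 t), a + 0 * \<alpha>)" by simp
    then show "z \<in> G'" using z unfolding G'_def by blast
  qed
  moreover have "(x0, \<alpha>) \<in> G'"
  proof -
    have "\<exists>y a c. (x0, \<alpha>) = ((\<lambda>t. y t + c * x0 t), a + c * \<alpha>) \<and> (y, a) \<in> G"
      using zG by (intro exI[of _ "\<lambda>t. 0"] exI[of _ 0] exI[of _ 1]) simp
    then show ?thesis unfolding G'_def by blast
  qed
  then have "G' \<noteq> G" using nx by auto
  ultimately show ?thesis by blast
qed

theorem HB:
  assumes G0: "lin_graph W p G0"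
  shows "\<exists>L. (\<forall>x\<in>W. L x \<le> p x) \<and> (\<forall>x\<in>W. \<forall>y\<in>W. L (\<lambda>t. x t + y t) = L x + L y) \<and>
             (\<forall>x\<in>W. \<forall>c. L (\<lambda>t. c * x t) = c * L x) \<and> (\<forall>x a. (x, a) \<in> G0 \<longrightarrow> L x = a)"
proof -
  define A where "A = {G. lin_graph W p G \<and> G0 \<subseteq> G}"
  have "\<exists>M\<in>A. \<forall>X\<in>A. M \<subseteq> X \<longrightarrow> X = M"
  proof (rule subset_Zorn_nonempty)
    show "A \<noteq> {}" using G0 unfolding A_def by blast
    fix C assume C: "C \<noteq> {}" "subset.chain A C"
    have CA: "C \<subseteq> A" and ch: "\<And>X Y. X \<in> C \<Longrightarrow> Y \<in> C \<Longrightarrow> X \<subseteq> Y \<or> Y \<subseteq> X"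
      using C(2) unfolding subset.chain_def by auto
    have lgC: "\<And>X. X \<in> C \<Longrightarrow> lin_graph W p X" and g0C: "\<And>X. X \<in> C \<Longrightarrow> G0 \<subseteq> X"
      using CA unfolding A_def by auto
    have two: "\<exists>Z\<in>C. (x, a) \<in> Z \<and> (y, b) \<in> Z" if h1: "(x, a) \<in> \<Union>C" and h2: "(y, b) \<in> \<Union>C" for x a y b
    proof -
      obtain X where "X \<in> C" "(x, a) \<in> X" using h1 by blast
      moreover obtain Y where "Y \<in> C" "(y, b) \<in> Y" using h2 by blast
      ultimately show ?thesis using ch[of X Y] by blast
    qed
    have "lin_graph W p (\<Union>C)"
      unfolding lin_graph_def
    proof (intro conjI allI impI)
      show "\<Union>C \<noteq> {}" using C(1) lgC unfolding lin_graph_def by blast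
    next
      fix x a assume "(x, a) \<in> \<Union>C"
      then obtain X where "X \<in> C" "(x, a) \<in> X" by auto
      then show "x \<in> W" "a \<le> p x" using lg_W[OF lgC] lg_p[OF lgC] by auto
    next
      fix x a y b assume "(x, a) \<in> \<Union>C" "(y, b) \<in> \<Union>C"
      then obtain Z where "Z \<in> C" "(x, a) \<in> Z" "(y, b) \<in> Z" using two by blast
      then show "((\<lambda>t. x t + y t), a + b) \<in> \<Union>C" using lg_add[OF lgC] by blast
    next
      fix x a c assume "(x, a) \<in> \<Union>C"
      then obtain X where "X \<in> C" "(x, a) \<in> X" by auto
      then show "((\<lambda>t. c * x t), c * a) \<in> \<Union>C" using lg_scal[OF lgC] by blast
    next
      fix x a b assume "(x, a) \<in> \<Union>C" "(x, b) \<in> \<Union>C"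
      then obtain Z where "Z \<in> C" "(x, a) \<in> Z" "(x, b) \<in> Z" using two by blast
      then show "a = b" using lg_fun[OF lgC] by blast
    qed
    moreover have "G0 \<subseteq> \<Union>C" using C(1) g0C by blast
    ultimately show "\<Union>C \<in> A" unfolding A_def by blast
  qed
  then obtain M where MA: "M \<in> A" and max': "\<forall>X\<in>A. M \<subseteq> X \<longrightarrow> X = M" by (rule bexE)
  have M: "lin_graph W p M" "G0 \<subseteq> M" using MA unfolding A_def by auto
  have max: "\<And>X. X \<in> A \<Longrightarrow> M \<subseteq> X \<Longrightarrow> X = M" using max' by blast
  have total: "\<exists>a. (x, a) \<in> M" if x: "x \<in> W" for x
  proof (rule ccontr)
    assume "\<nexists>a. (x, a) \<in> M"
    then have "\<forall>a. (x, a) \<notin> M" by simp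
    then obtain G' where G': "lin_graph W p G'" "M \<subseteq> G'" "G' \<noteq> M" using HB_ext[OF M(1) x] by metis
    have "G0 \<subseteq> G'" using M(2) G'(2) by (rule subset_trans)
    then have "G' \<in> A" using G'(1) unfolding A_def by simp
    from max[OF this G'(2)] G'(3) show False by simp
  qed
  define L where "L x = (THE a. (x, a) \<in> M)" for x
  have LM: "(x, L x) \<in> M" if xW: "x \<in> W" for x
  proof -
    obtain a where a: "(x, a) \<in> M" using total[OF xW] by blast
    have "(THE a. (x, a) \<in> M) = a"
    proof (rule the_equality)
      show "(x, a) \<in> M" by (rule a)
      fix b assume "(x, b) \<in> M" then show "b = a" using lg_fun[OF M(1) a] by metis
    qed
    then show ?thesis using a L_def by simp
  qed
  have Leq: "L x = a" if xa: "(x, a) \<in> M" for x a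
  proof -
    have "x \<in> W" by (rule lg_W[OF M(1) xa])
    from LM[OF this] show ?thesis using lg_fun[OF M(1)] xa by blast
  qed
  show ?thesis
  proof (intro exI[of _ L] conjI ballI allI impI)
    fix x assume "x \<in> W" then show "L x \<le> p x" using lg_p[OF M(1) LM] by blast
  next
    fix x y assume "x \<in> W" "y \<in> W"
    then show "L (\<lambda>t. x t + y t) = L x + L y" using Leq[OF lg_add[OF M(1) LM LM]] by blast
  next
    fix x c assume "x \<in> W"
    then show "L (\<lambda>t. c * x t) = c * L x" using Leq[OF lg_scal[OF M(1) LM]] by blast
  next
    fix x a assume "(x, a) \<in> G0" then have "(x, a) \<in> M" using M(2) by blast
    then show "L x = a" by (rule Leq)
  qed
qed

end


section \<open>Riesz representation (compact metric spaces)\<close>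

definition adm :: "'a::topological_space set \<Rightarrow> ('a \<Rightarrow> real) \<Rightarrow> bool" where
  "adm V \<phi> \<longleftrightarrow> cfun \<phi> \<and> (\<forall>x. 0 \<le> \<phi> x \<and> \<phi> x \<le> 1) \<and> (\<forall>x. x \<notin> V \<longrightarrow> \<phi> x = 0)"

lemma cfun_max[intro]: "cfun f \<Longrightarrow> cfun g \<Longrightarrow> cfun (\<lambda>x. max (f x) (g x))"
  unfolding cfun_def by (rule continuous_on_max)
lemma cfun_min[intro]: "cfun f \<Longrightarrow> cfun g \<Longrightarrow> cfun (\<lambda>x. min (f x) (g x))"
  unfolding cfun_def by (rule continuous_on_min)
lemma cfun_sum[intro]: "(\<And>i. i \<in> I \<Longrightarrow> cfun (f i)) \<Longrightarrow> cfun (\<lambda>x. \<Sum>i\<in>I. f i x)"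
  unfolding cfun_def by (rule continuous_on_sum) auto
lemma cfun_infdist[intro]: "cfun (\<lambda>x. infdist x A)"
  unfolding cfun_def by (intro continuous_on_infdist continuous_on_id)

lemma compact_infdist_pos:
  fixes K V :: "'a::metric_space set"
  assumes "compact K" "open V" "K \<subseteq> V" "V \<noteq> UNIV"
  shows "\<exists>\<delta>>0. \<forall>x\<in>K. \<delta> \<le> infdist x (- V)"
proof (cases "K = {}")
  case True then show ?thesis by (auto intro: exI[of _ 1])
next
  case False
  have "continuous_on K (\<lambda>x. infdist x (- V))" by (intro continuous_on_infdist continuous_on_id)
  then obtain x0 where x0: "x0 \<in> K" "\<forall>y\<in>K. infdist x0 (- V) \<le> infdist y (- V)"
    using continuous_attains_inf[OF assms(1) False] by blast
  have "0 < infdist x0 (- V)"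
    using x0(1) assms by (intro infdist_pos_not_in_closed) auto
  then show ?thesis using x0 by blast
qed

lemma layer_sum:
  fixes a t :: real and N :: nat
  assumes a: "a > 0" and t: "0 \<le> t" "t \<le> real N * a"
  shows "(\<Sum>j<N. min a (max 0 (t - real j * a))) = t"
  using t
proof (induction N arbitrary: t)
  case 0 then show ?case by simp
next
  case (Suc N)
  have e: "t - real (Suc j) * a = (t - a) - real j * a" for j by (simp add: algebra_simps)
  have "(\<Sum>j<Suc N. min a (max 0 (t - real j * a))) =
        min a (max 0 (t - real 0 * a)) + (\<Sum>j<N. min a (max 0 (t - real (Suc j) * a)))"
    by (rule sum.lessThan_Suc_shift)
  also have "\<dots> = min a (max 0 t) + (\<Sum>j<N. min a (max 0 ((t - a) - real j * a)))"
    by (simp only: e)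
  also have "\<dots> = t"
  proof (cases "t \<le> a")
    case True
    have "(\<Sum>j<N. min a (max 0 ((t - a) - real j * a))) = 0"
    proof (intro sum.neutral ballI)
      fix j assume "j \<in> {..<N}"
      have "0 \<le> real j * a" using a by simp
      then have "(t - a) - real j * a \<le> 0" using True by linarith
      then show "min a (max 0 ((t - a) - real j * a)) = 0" using a by simp
    qed
    then show ?thesis using True Suc.prems by simp
  next
    case False
    have "(\<Sum>j<N. min a (max 0 ((t - a) - real j * a))) = t - a"
      using False Suc.prems by (intro Suc.IH) (auto simp: algebra_simps)
    then show ?thesis using False by simp
  qed
  finally show ?case .
qed

locale riesz =
  fixes L :: "('a::metric_space \<Rightarrow> real) \<Rightarrow> real"
  assumes cX: "compact (UNIV::'a set)"
    and Ladd: "\<And>f g. cfun f \<Longrightarrow> cfun g \<Longrightarrow> L (\<lambda>x. f x + g x) = L f + L g"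
    and Lscal: "\<And>f c. cfun f \<Longrightarrow> L (\<lambda>x. c * f x) = c * L f"
    and Lpos: "\<And>f. cfun f \<Longrightarrow> (\<And>x. 0 \<le> f x) \<Longrightarrow> 0 \<le> L f"
begin

lemma L0: "L (\<lambda>x. 0) = 0"
  using Lscal[of "\<lambda>x. 0" 0] by simp

lemma Ldiff: "cfun f \<Longrightarrow> cfun g \<Longrightarrow> L (\<lambda>x. f x - g x) = L f - L g"
proof -
  assume f: "cfun f" and g: "cfun g"
  have "(\<lambda>x. f x - g x) = (\<lambda>x. f x + (\<lambda>x. (-1) * g x) x)" by simp
  then show ?thesis using Ladd[OF f cfun_mult[OF g, of "-1"]] Lscal[OF g, of "-1"] by simp
qed

lemma Lmono: "cfun f \<Longrightarrow> cfun g \<Longrightarrow> (\<And>x. f x \<le> g x) \<Longrightarrow> L f \<le> L g"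
  using Lpos[of "\<lambda>x. g x - f x"] Ldiff[of g f] by auto

lemma Lsum: "finite I \<Longrightarrow> (\<And>i. i \<in> I \<Longrightarrow> cfun (f i)) \<Longrightarrow> L (\<lambda>x. \<Sum>i\<in>I. f i x) = (\<Sum>i\<in>I. L (f i))"
proof (induction I rule: finite_induct)
  case empty then show ?case using L0 by simp
next
  case (insert a I)
  have "L (\<lambda>x. \<Sum>i\<in>insert a I. f i x) = L (\<lambda>x. f a x + (\<lambda>x. \<Sum>i\<in>I. f i x) x)"
    using insert by simp
  also have "\<dots> = L (f a) + L (\<lambda>x. \<Sum>i\<in>I. f i x)"
    using insert by (intro Ladd) (auto intro!: cfun_sum)
  finally show ?case using insert by simp
qed

definition nu :: "'a set \<Rightarrow> real" where
  "nu V = Sup {L \<phi> | \<phi>. adm V \<phi>}"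

definition out :: "'a set \<Rightarrow> real" where
  "out A = Inf {nu V | V. open V \<and> A \<subseteq> V}"

lemma adm_zero: "adm V (\<lambda>x. 0)" unfolding adm_def by simp

lemma adm_le1: "adm V \<phi> \<Longrightarrow> L \<phi> \<le> L (\<lambda>x. 1)"
  unfolding adm_def by (intro Lmono) auto

lemma nu_ne: "{L \<phi> | \<phi>. adm V \<phi>} \<noteq> {}" using adm_zero by blast
lemma nu_bdd: "bdd_above {L \<phi> | \<phi>. adm V \<phi>}"
  using adm_le1 by (intro bdd_aboveI[where M="L (\<lambda>x. 1)"]) blast

lemma nu_upper: "adm V \<phi> \<Longrightarrow> L \<phi> \<le> nu V"
  unfolding nu_def by (rule cSup_upper[OF _ nu_bdd]) blast

lemma nu_least: "(\<And>\<phi>. adm V \<phi> \<Longrightarrow> L \<phi> \<le> c) \<Longrightarrow> nu V \<le> c"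
  unfolding nu_def by (rule cSup_least[OF nu_ne]) blast

lemma nu_nonneg: "0 \<le> nu V"
  using nu_upper[OF adm_zero] L0 by simp

lemma nu_le1: "nu V \<le> L (\<lambda>x. 1)"
  using adm_le1 by (intro nu_least) blast

lemma nu_mono: "V1 \<subseteq> V2 \<Longrightarrow> nu V1 \<le> nu V2"
  by (intro nu_least nu_upper) (auto simp: adm_def)

lemma nu_UNIV: "nu UNIV = L (\<lambda>x. 1)"
  using nu_le1[of UNIV] nu_upper[of UNIV "\<lambda>x. 1"] by (auto simp: adm_def)

lemma nu_approx:
  assumes "\<epsilon> > 0" shows "\<exists>\<phi>. adm V \<phi> \<and> nu V - \<epsilon> < L \<phi>"
proof -
  have "nu V - \<epsilon> < Sup {L \<phi> | \<phi>. adm V \<phi>}" using assms nu_def by simp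
  then obtain v where "v \<in> {L \<phi> | \<phi>. adm V \<phi>}" "nu V - \<epsilon> < v"
    using less_cSupE[OF _ nu_ne] by blast
  then show ?thesis by blast
qed

lemma out_ne: "{nu V | V. open V \<and> A \<subseteq> V} \<noteq> {}" by blast
lemma out_bdd: "bdd_below {nu V | V. open V \<and> A \<subseteq> V}"
  using nu_nonneg by (intro bdd_belowI[where m=0]) blast

lemma out_le_nu: "open V \<Longrightarrow> A \<subseteq> V \<Longrightarrow> out A \<le> nu V"
  unfolding out_def by (rule cInf_lower[OF _ out_bdd]) blast

lemma out_greatest: "(\<And>V. open V \<Longrightarrow> A \<subseteq> V \<Longrightarrow> c \<le> nu V) \<Longrightarrow> c \<le> out A"
  unfolding out_def by (rule cInf_greatest[OF out_ne]) blast

lemma out_nonneg: "0 \<le> out A"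
  using nu_nonneg by (intro out_greatest) auto

lemma out_le1: "out A \<le> L (\<lambda>x. 1)"
  using out_le_nu[of UNIV A] nu_le1[of UNIV] by simp

lemma out_open: "open V \<Longrightarrow> out V = nu V"
  using out_le_nu[of V V] nu_mono by (intro antisym out_greatest) auto

lemma out_mono: "A \<subseteq> B \<Longrightarrow> out A \<le> out B"
  by (intro out_greatest out_le_nu) auto

lemma out_approx:
  assumes "\<epsilon> > 0" shows "\<exists>V. open V \<and> A \<subseteq> V \<and> nu V < out A + \<epsilon>"
proof -
  have "Inf {nu V | V. open V \<and> A \<subseteq> V} < out A + \<epsilon>" using assms out_def by simp
  then obtain v where "v \<in> {nu V | V. open V \<and> A \<subseteq> V}" "v < out A + \<epsilon>"
    using cInf_lessD[OF out_ne] by blast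
  then show ?thesis by blast
qed

lemma cut_facts:
  assumes a: "adm V \<phi>" and e: "\<epsilon> > 0"
  defines "g \<equiv> \<lambda>x. max 0 (\<phi> x - \<epsilon>)"
  shows "adm V g" "L \<phi> \<le> L g + \<epsilon> * L (\<lambda>x. 1)" "closed {x. \<epsilon> \<le> \<phi> x}" "{x. \<epsilon> \<le> \<phi> x} \<subseteq> V"
    "\<And>x. \<phi> x < \<epsilon> \<Longrightarrow> g x = 0" "\<And>x. g x \<le> \<phi> x"
proof -
  have c: "cfun \<phi>" and b: "\<And>x. 0 \<le> \<phi> x \<and> \<phi> x \<le> 1" and z: "\<And>x. x \<notin> V \<Longrightarrow> \<phi> x = 0"
    using a unfolding adm_def by auto
  have cg: "cfun g" unfolding g_def using c by (intro cfun_max cfun_diff) auto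
  show "adm V g" unfolding adm_def
  proof (intro conjI allI impI cg)
    fix x show "0 \<le> g x" "g x \<le> 1" using b[of x] e by (auto simp: g_def)
    assume "x \<notin> V" then show "g x = 0" using z[of x] e by (simp add: g_def)
  qed
  have "L \<phi> \<le> L (\<lambda>x. g x + \<epsilon> * 1)"
  proof (rule Lmono[OF c])
    show "cfun (\<lambda>x. g x + \<epsilon> * 1)" using cg by auto
    show "\<phi> x \<le> g x + \<epsilon> * 1" for x unfolding g_def by linarith
  qed
  also have "\<dots> = L g + L (\<lambda>x. \<epsilon> * 1)" by (rule Ladd[OF cg cfun_mult[OF cfun_const]])
  also have "L (\<lambda>x. \<epsilon> * 1) = \<epsilon> * L (\<lambda>x. 1)" by (rule Lscal[OF cfun_const])
  finally show "L \<phi> \<le> L g + \<epsilon> * L (\<lambda>x. 1)" .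
  show "closed {x. \<epsilon> \<le> \<phi> x}"
  proof -
    have "continuous_on UNIV \<phi>" using c unfolding cfun_def .
    then show ?thesis by (rule closed_Collect_le[OF continuous_on_const])
  qed
  show "{x. \<epsilon> \<le> \<phi> x} \<subseteq> V"
  proof
    fix x assume "x \<in> {x. \<epsilon> \<le> \<phi> x}"
    then have "\<epsilon> \<le> \<phi> x" by simp
    then show "x \<in> V" using z[of x] e by (cases "x \<in> V") auto
  qed
  show "\<And>x. \<phi> x < \<epsilon> \<Longrightarrow> g x = 0" by (simp add: g_def)
  show "\<And>x. g x \<le> \<phi> x" using e b by (simp add: g_def)
qed

lemma le_eps_mult:
  fixes a b c :: real
  assumes "\<And>e. e > 0 \<Longrightarrow> a \<le> b + e * c" "c \<ge> 0"
  shows "a \<le> b"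
proof (rule field_le_epsilon)
  fix e :: real assume e: "e > 0"
  have "a \<le> b + (e / (c + 1)) * c" using assms(1)[of "e / (c+1)"] e assms(2) by simp
  also have "(e / (c + 1)) * c \<le> e" using e assms(2) by (simp add: field_simps)
  finally show "a \<le> b + e" by simp
qed

lemma L1_nonneg: "0 \<le> L (\<lambda>x. 1)" by (rule Lpos) auto

lemma adm_empty: "adm {} \<phi> \<Longrightarrow> L \<phi> = 0"
proof -
  assume "adm {} \<phi>"
  then have "\<phi> = (\<lambda>x. 0)" unfolding adm_def by auto
  then show ?thesis using L0 by simp
qed

lemma nu_empty: "nu {} = 0"
  using nu_nonneg[of "{}"] adm_empty by (intro antisym nu_least) auto

lemma nu_union2:
  assumes o1: "open V1" and o2: "open V2"
  shows "nu (V1 \<union> V2) \<le> nu V1 + nu V2"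
proof (cases "V1 = UNIV \<or> V2 = UNIV")
  case True
  then show ?thesis using nu_nonneg[of V1] nu_nonneg[of V2] by auto
next
  case False
  then have n1: "V1 \<noteq> UNIV" and n2: "V2 \<noteq> UNIV" by auto
  show ?thesis
  proof (rule nu_least)
    fix \<phi> assume a: "adm (V1 \<union> V2) \<phi>"
    show "L \<phi> \<le> nu V1 + nu V2"
    proof (rule le_eps_mult[OF _ L1_nonneg])
      fix \<epsilon> :: real assume e: "\<epsilon> > 0"
      define g where "g = (\<lambda>x. max 0 (\<phi> x - \<epsilon>))"
      note cf = cut_facts[OF a e, folded g_def]
      have ga: "cfun g" "\<And>x. 0 \<le> g x" "\<And>x. g x \<le> 1" using cf(1) unfolding adm_def by auto
      define F where "F = {x. \<epsilon> \<le> \<phi> x}"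
      have cF: "compact F"
      proof -
        have "compact (UNIV \<inter> F)" using cf(3) unfolding F_def by (rule compact_Int_closed[OF cX])
        then show ?thesis by simp
      qed
      define K2 where "K2 = F \<inter> - V2"
      have cK2: "compact K2" unfolding K2_def using cF o2 by (intro compact_Int_closed) auto
      have K2V1: "K2 \<subseteq> V1" using cf(4) unfolding K2_def F_def by auto
      obtain \<delta> where d: "\<delta> > 0" "\<forall>x\<in>K2. \<delta> \<le> infdist x (- V1)"
        using compact_infdist_pos[OF cK2 o1 K2V1 n1] by blast
      define g1 where "g1 = (\<lambda>x. min (g x) ((1/\<delta>) * infdist x (- V1)))"
      define g2 where "g2 = (\<lambda>x. g x - g1 x)"
      have cg1: "cfun g1" unfolding g1_def using ga(1) by (intro cfun_min cfun_mult cfun_infdist)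
      have cg2: "cfun g2" unfolding g2_def using ga(1) cg1 by (intro cfun_diff)
      have id0: "0 \<le> infdist x (- V1)" for x by (rule infdist_nonneg)
      have g1pos: "0 \<le> g1 x" for x using ga(2)[of x] id0[of x] d(1) unfolding g1_def by simp
      have g1le: "g1 x \<le> g x" for x unfolding g1_def by simp
      have adm1: "adm V1 g1" unfolding adm_def
      proof (intro conjI allI impI cg1)
        fix x show "0 \<le> g1 x" by (rule g1pos)
        show "g1 x \<le> 1" using g1le[of x] ga(3)[of x] by linarith
        assume "x \<notin> V1"
        then have "infdist x (- V1) = 0" by (intro infdist_zero) simp
        then show "g1 x = 0" using ga(2)[of x] unfolding g1_def by simp
      qed
      have adm2: "adm V2 g2" unfolding adm_def
      proof (intro conjI allI impI cg2)
        fix x show "0 \<le> g2 x" using g1le[of x] unfolding g2_def by simp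
        show "g2 x \<le> 1" using g1pos[of x] ga(3)[of x] unfolding g2_def by linarith
        assume x2: "x \<notin> V2"
        show "g2 x = 0"
        proof (cases "\<phi> x < \<epsilon>")
          case True
          then have "g x = 0" unfolding g_def by simp
          then show ?thesis using g1pos[of x] g1le[of x] unfolding g2_def by simp
        next
          case False
          then have "x \<in> K2" using x2 unfolding K2_def F_def by auto
          then have "\<delta> \<le> infdist x (- V1)" using d(2) by blast
          then have "1 \<le> (1/\<delta>) * infdist x (- V1)" using d(1) by (simp add: field_simps)
          then have "g1 x = g x" using ga(3)[of x] unfolding g1_def by simp
          then show ?thesis unfolding g2_def by simp
        qed
      qed
      have "g = (\<lambda>x. g1 x + g2 x)" unfolding g2_def by simp
      then have "L g = L g1 + L g2" using Ladd[OF cg1 cg2] by simp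
      also have "\<dots> \<le> nu V1 + nu V2" using nu_upper[OF adm1] nu_upper[OF adm2] by simp
      finally show "L \<phi> \<le> nu V1 + nu V2 + \<epsilon> * L (\<lambda>x. 1)" using cf(2) by simp
    qed
  qed
qed

lemma nu_finite_union:
  fixes n :: nat
  assumes "\<And>i. open (V i)"
  shows "nu (\<Union>i<n. V i) \<le> (\<Sum>i<n. nu (V i))"
proof (induction n)
  case 0 then show ?case using nu_empty by simp
next
  case (Suc n)
  have "(\<Union>i<Suc n. V i) = (\<Union>i<n. V i) \<union> V n" by (auto simp: lessThan_Suc)
  have "open (\<Union>i<n. V i)" using assms by (intro open_UN) auto
  then have "nu ((\<Union>i<n. V i) \<union> V n) \<le> nu (\<Union>i<n. V i) + nu (V n)"
    using nu_union2[of "\<Union>i<n. V i" "V n"] assms by blast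
  then have "nu (\<Union>i<Suc n. V i) \<le> nu (\<Union>i<n. V i) + nu (V n)"
    using \<open>(\<Union>i<Suc n. V i) = (\<Union>i<n. V i) \<union> V n\<close> by simp
  then show ?case using Suc by simp
qed

lemma nu_countable_approx:
  fixes V :: "nat \<Rightarrow> 'a set"
  assumes o: "\<And>i. open (V i)" and a: "adm (\<Union>i. V i) \<phi>" and e: "\<epsilon> > 0"
  shows "\<exists>n. L \<phi> \<le> (\<Sum>i<n. nu (V i)) + \<epsilon> * L (\<lambda>x. 1)"
proof -
  define g where "g = (\<lambda>x. max 0 (\<phi> x - \<epsilon>))"
  note cf = cut_facts[OF a e, folded g_def]
  define F where "F = {x. \<epsilon> \<le> \<phi> x}"
  have cF: "compact F"
      proof -
        have "compact (UNIV \<inter> F)" using cf(3) unfolding F_def by (rule compact_Int_closed[OF cX])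
        then show ?thesis by simp
      qed
  have "F \<subseteq> \<Union>(V ` UNIV)" using cf(4) F_def by auto
  then obtain C where C: "finite C" "F \<subseteq> \<Union>(V ` C)"
    using compactE_image[OF cF, of UNIV V] o by metis
  obtain n where n: "C \<subseteq> {..<n}" using finite_nat_bounded[OF C(1)] by blast
  have FV: "F \<subseteq> (\<Union>i<n. V i)" using C(2) n by auto
  have "adm (\<Union>i<n. V i) g" unfolding adm_def
  proof (intro conjI allI impI)
    show "cfun g" "0 \<le> g x" "g x \<le> 1" for x using cf(1) unfolding adm_def by auto
    fix x assume "x \<notin> (\<Union>i<n. V i)"
    then have "x \<notin> F" using FV by blast
    then have "\<phi> x < \<epsilon>" unfolding F_def by simp
    then show "g x = 0" unfolding g_def by simp
  qed
  then have "L g \<le> nu (\<Union>i<n. V i)" by (rule nu_upper)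
  also have "\<dots> \<le> (\<Sum>i<n. nu (V i))" by (rule nu_finite_union[OF o])
  finally show ?thesis using cf(2) by (intro exI[of _ n]) simp
qed

lemma nu_countable:
  fixes V :: "nat \<Rightarrow> 'a set"
  assumes o: "\<And>i. open (V i)"
  shows "ennreal (nu (\<Union>i. V i)) \<le> (\<Sum>i. ennreal (nu (V i)))"
proof (cases "(\<Sum>i. ennreal (nu (V i))) = top")
  case True then show ?thesis by simp
next
  case False
  then obtain r where r: "(\<Sum>i. ennreal (nu (V i))) = ennreal r" "0 \<le> r"
    by (metis ennreal_cases ennreal_enn2real_if)
  have fin: "(\<Sum>i<n. nu (V i)) \<le> r" for n
  proof -
    have "ennreal (\<Sum>i<n. nu (V i)) = (\<Sum>i<n. ennreal (nu (V i)))"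
      using nu_nonneg by (intro sum_ennreal[symmetric]) auto
    also have "\<dots> \<le> (\<Sum>i. ennreal (nu (V i)))" by (intro sum_le_suminf) auto
    finally show ?thesis using r by (simp add: ennreal_le_iff)
  qed
  have "nu (\<Union>i. V i) \<le> r"
  proof (rule nu_least)
    fix \<phi> assume a: "adm (\<Union>i. V i) \<phi>"
    show "L \<phi> \<le> r"
    proof (rule le_eps_mult[OF _ L1_nonneg])
      fix e :: real assume "e > 0"
      then obtain n where "L \<phi> \<le> (\<Sum>i<n. nu (V i)) + e * L (\<lambda>x. 1)"
        using nu_countable_approx[OF o a] by blast
      then show "L \<phi> \<le> r + e * L (\<lambda>x. 1)" using fin[of n] by linarith
    qed
  qed
  then show ?thesis using r by (simp add: ennreal_le_iff)
qed

lemma out_union2: "out (A \<union> B) \<le> out A + out B"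
proof (rule field_le_epsilon)
  fix e :: real assume e: "e > 0"
  obtain VA where VA: "open VA" "A \<subseteq> VA" "nu VA < out A + e/2" using out_approx[of "e/2" A] e by auto
  obtain VB where VB: "open VB" "B \<subseteq> VB" "nu VB < out B + e/2" using out_approx[of "e/2" B] e by auto
  have "out (A \<union> B) \<le> nu (VA \<union> VB)" using VA VB by (intro out_le_nu) auto
  also have "\<dots> \<le> nu VA + nu VB" using nu_union2[OF VA(1) VB(1)] .
  finally show "out (A \<union> B) \<le> out A + out B + e" using VA(3) VB(3) by linarith
qed

lemma nu_carath:
  assumes oU: "open U" and oV: "open V"
  shows "nu (U \<inter> V) + out (U - V) \<le> nu U"
proof (rule le_eps_mult[where c="2 + L (\<lambda>x. 1)"])
  show "0 \<le> 2 + L (\<lambda>x. 1)" using L1_nonneg by simp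
  fix \<epsilon> :: real assume e: "\<epsilon> > 0"
  obtain \<phi>1 where p1: "adm (U \<inter> V) \<phi>1" "nu (U \<inter> V) - \<epsilon> < L \<phi>1" using nu_approx[OF e] by blast
  define g1 where "g1 = (\<lambda>x. max 0 (\<phi>1 x - \<epsilon>))"
  note cf = cut_facts[OF p1(1) e, folded g1_def]
  define F1 where "F1 = {x. \<epsilon> \<le> \<phi>1 x}"
  define W where "W = U \<inter> - F1"
  have oW: "open W" unfolding W_def F1_def using oU cf(3) by (intro open_Int) auto
  have UVW: "U - V \<subseteq> W"
  proof
    fix x assume x: "x \<in> U - V"
    then have "\<phi>1 x = 0" using p1(1) unfolding adm_def by auto
    then show "x \<in> W" using x e unfolding W_def F1_def by auto
  qed
  obtain \<phi>2 where p2: "adm W \<phi>2" "nu W - \<epsilon> < L \<phi>2" using nu_approx[OF e] by blast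
  have ag1: "cfun g1" "\<And>x. 0 \<le> g1 x" "\<And>x. g1 x \<le> 1" "\<And>x. x \<notin> U \<inter> V \<Longrightarrow> g1 x = 0"
    using cf(1) unfolding adm_def by auto
  have ap2: "cfun \<phi>2" "\<And>x. 0 \<le> \<phi>2 x" "\<And>x. \<phi>2 x \<le> 1" "\<And>x. x \<notin> W \<Longrightarrow> \<phi>2 x = 0"
    using p2(1) unfolding adm_def by auto
  have admh: "adm U (\<lambda>x. g1 x + \<phi>2 x)" unfolding adm_def
  proof (intro conjI allI impI)
    show "cfun (\<lambda>x. g1 x + \<phi>2 x)" using ag1(1) ap2(1) by (rule cfun_add)
    fix x
    show "0 \<le> g1 x + \<phi>2 x" using ag1(2)[of x] ap2(2)[of x] by simp
    show "g1 x + \<phi>2 x \<le> 1"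
    proof (cases "\<epsilon> \<le> \<phi>1 x")
      case True
      then have "x \<notin> W" unfolding W_def F1_def by auto
      then show ?thesis using ap2(4)[of x] ag1(3)[of x] by simp
    next
      case False
      then have "g1 x = 0" unfolding g1_def by simp
      then show ?thesis using ap2(3)[of x] by simp
    qed
    assume "x \<notin> U"
    then show "g1 x + \<phi>2 x = 0" using ag1(4)[of x] ap2(4)[of x] unfolding W_def by auto
  qed
  have "L (\<lambda>x. g1 x + \<phi>2 x) = L g1 + L \<phi>2" by (rule Ladd[OF ag1(1) ap2(1)])
  moreover have "L (\<lambda>x. g1 x + \<phi>2 x) \<le> nu U" by (rule nu_upper[OF admh])
  moreover have "out (U - V) \<le> nu W" by (rule out_le_nu[OF oW UVW])
  ultimately show "nu (U \<inter> V) + out (U - V) \<le> nu U + \<epsilon> * (2 + L (\<lambda>x. 1))"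
    using cf(2) p1(2) p2(2) by (simp add: algebra_simps)
qed

lemma out_carath:
  assumes oV: "open V"
  shows "out (V \<inter> X) + out ((UNIV - V) \<inter> X) = out X"
proof (rule antisym)
  show "out X \<le> out (V \<inter> X) + out ((UNIV - V) \<inter> X)"
  proof -
    have "X = (V \<inter> X) \<union> ((UNIV - V) \<inter> X)" by blast
    then show ?thesis using out_union2[of "V \<inter> X" "(UNIV - V) \<inter> X"] by simp
  qed
  show "out (V \<inter> X) + out ((UNIV - V) \<inter> X) \<le> out X"
  proof (rule field_le_epsilon)
    fix e :: real assume e: "e > 0"
    obtain U where U: "open U" "X \<subseteq> U" "nu U < out X + e" using out_approx[OF e] by blast
    have "out (V \<inter> X) \<le> nu (U \<inter> V)" using U oV by (intro out_le_nu) auto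
    moreover have "out ((UNIV - V) \<inter> X) \<le> out (U - V)" using U by (intro out_mono) auto
    moreover have "nu (U \<inter> V) + out (U - V) \<le> nu U" by (rule nu_carath[OF U(1) oV])
    ultimately show "out (V \<inter> X) + out ((UNIV - V) \<inter> X) \<le> out X + e" using U(3) by linarith
  qed
qed

definition om :: "'a set \<Rightarrow> ennreal" where
  "om A = ennreal (out A)"

lemma out_empty: "out {} = 0"
  using out_le_nu[of "{}" "{}"] nu_empty out_nonneg[of "{}"] by simp

lemma om_outer: "outer_measure_space (Pow UNIV) om"
  unfolding outer_measure_space_def
proof (intro conjI)
  show "positive (Pow UNIV) om" unfolding positive_def om_def using out_empty by simp
  show "increasing (Pow UNIV) om" unfolding increasing_def om_def
    by (auto intro!: ennreal_leI out_mono)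
  show "countably_subadditive (Pow UNIV) om"
    unfolding countably_subadditive_def
  proof (intro allI impI)
    fix A :: "nat \<Rightarrow> 'a set"
    show "om (\<Union>i. A i) \<le> (\<Sum>i. om (A i))"
    proof (rule ennreal_le_epsilon)
      fix e :: real assume e: "e > 0"
      have "\<forall>i. \<exists>V. open V \<and> A i \<subseteq> V \<and> nu V < out (A i) + e * (1/2)^Suc i"
        using e by (intro allI out_approx) simp
      then obtain V where V: "\<And>i. open (V i)" "\<And>i. A i \<subseteq> V i" "\<And>i. nu (V i) < out (A i) + e * (1/2)^Suc i"
        by metis
      have "om (\<Union>i. A i) \<le> ennreal (nu (\<Union>i. V i))"
        unfolding om_def using V by (intro ennreal_leI out_le_nu) auto
      also have "\<dots> \<le> (\<Sum>i. ennreal (nu (V i)))" by (rule nu_countable[OF V(1)])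
      also have "\<dots> \<le> (\<Sum>i. om (A i) + ennreal (e * (1/2)^Suc i))"
      proof (intro suminf_le allI)
        fix i
        have "ennreal (nu (V i)) \<le> ennreal (out (A i) + e * (1/2)^Suc i)"
          using V(3)[of i] by (intro ennreal_leI) simp
        also have "\<dots> = om (A i) + ennreal (e * (1/2)^Suc i)"
          unfolding om_def using out_nonneg e by (intro ennreal_plus) auto
        finally show "ennreal (nu (V i)) \<le> om (A i) + ennreal (e * (1/2)^Suc i)" .
      qed auto
      also have "\<dots> = (\<Sum>i. om (A i)) + (\<Sum>i. ennreal (e * (1/2)^Suc i))"
        by (rule suminf_add[symmetric]) auto
      also have "(\<Sum>i. ennreal (e * (1/2)^Suc i)) = ennreal e"
      proof (rule suminf_ennreal_eq)
        show "0 \<le> e * (1/2)^Suc i" for i using e by simp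
        show "(\<lambda>i. e * (1/2)^Suc i) sums e" using sums_mult[OF power_half_series, of e] by simp
      qed
      finally show "om (\<Union>i. A i) \<le> (\<Sum>i. om (A i)) + ennreal e" .
    qed
  qed
qed

lemma lam_open:
  assumes oV: "open V" shows "V \<in> lambda_system UNIV (Pow UNIV) om"
  unfolding lambda_system_def
proof (intro CollectI conjI ballI)
  show "V \<in> Pow UNIV" by simp
  fix X :: "'a set"
  have "om (V \<inter> X) + om ((UNIV - V) \<inter> X) = ennreal (out (V \<inter> X) + out ((UNIV - V) \<inter> X))"
    unfolding om_def by (rule ennreal_plus[symmetric]) (rule out_nonneg)+
  also have "\<dots> = om X" unfolding om_def out_carath[OF oV] ..
  finally show "om (V \<inter> X) + om ((UNIV - V) \<inter> X) = om X" .
qed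

definition KK :: "'a measure" where
  "KK = measure_of UNIV (sets borel) om"

lemma KK_facts:
  shows "sets KK = sets borel" "\<And>A. A \<in> sets borel \<Longrightarrow> emeasure KK A = om A"
    "fin_borel_measure KK" "\<And>A. A \<in> sets borel \<Longrightarrow> measure KK A = out A"
proof -
  have ms: "measure_space UNIV (lambda_system UNIV (Pow UNIV) om) om"
    by (rule sigma_algebra.caratheodory_lemma[OF sigma_algebra_Pow om_outer])
  then have sa: "sigma_algebra UNIV (lambda_system UNIV (Pow UNIV) om)" by (simp add: measure_space_def)
  have sab: "sigma_algebra UNIV (sets borel)"
    unfolding sets_borel by (rule sigma_algebra_sigma_sets) simp
  have "sigma_sets UNIV {S. open S} \<subseteq> lambda_system UNIV (Pow UNIV) om"
    using lam_open by (intro sigma_algebra.sigma_sets_subset[OF sa]) auto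
  then have bor: "sets borel \<subseteq> lambda_system UNIV (Pow UNIV) om" by (simp add: sets_borel)
  have ms2: "measure_space UNIV (sets borel) om" by (rule measure_down[OF ms sab bor])
  show sK: "sets KK = sets borel" unfolding KK_def
    using sets_measure_of[of "sets borel" UNIV om] sigma_algebra.sigma_sets_eq[OF sab] by simp
  show em: "\<And>A. A \<in> sets borel \<Longrightarrow> emeasure KK A = om A" unfolding KK_def
    using ms2 unfolding measure_space_def by (intro emeasure_measure_of_sigma) auto
  have spK: "space KK = UNIV" using sK by (metis sets_eq_imp_space_eq space_borel)
  show "fin_borel_measure KK" unfolding fin_borel_measure_def
  proof (intro conjI sK finite_measureI)
    show "emeasure KK (space KK) \<noteq> \<infinity>" using em[of UNIV] spK by (simp add: om_def)
  qed
  show "\<And>A. A \<in> sets borel \<Longrightarrow> measure KK A = out A"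
    using em out_nonneg by (simp add: measure_def om_def)
qed

lemma KK_open: "open V \<Longrightarrow> measure KK V = nu V"
  using KK_facts(4)[of V] out_open by simp

lemma KK_UNIV: "measure KK UNIV = L (\<lambda>x. 1)"
  using KK_open[of UNIV] nu_UNIV by simp

lemma KK_int: "cfun \<phi> \<Longrightarrow> integrable KK \<phi>"
  by (rule fbm_int[OF cX KK_facts(3)])

lemma int_le_aux:
  fixes M :: real and N :: nat
  assumes c: "cfun \<phi>" and b: "\<And>x. 0 \<le> \<phi> x \<and> \<phi> x \<le> M" and M: "M > 0" and N: "N > 0"
  shows "integral\<^sup>L KK \<phi> \<le> L \<phi> + (M / real N) * L (\<lambda>x. 1)"
proof -
  define a where "a = M / real N"
  have a: "a > 0" using M N by (simp add: a_def)
  have Na: "real N * a = M" using N by (simp add: a_def)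
  define g where "g j = (\<lambda>x. min a (max 0 (\<phi> x - real j * a)))" for j :: nat
  define V where "V j = {x. real j * a < \<phi> x}" for j :: nat
  have cg: "cfun (g j)" for j unfolding g_def using c by (intro cfun_min cfun_max cfun_diff) auto
  have oV: "open (V j)" for j unfolding V_def using c unfolding cfun_def
    by (intro open_Collect_less continuous_on_const) auto
  have bV: "V j \<in> sets borel" for j using oV by simp
  have dec: "\<phi> = (\<lambda>x. \<Sum>j<N. g j x)"
  proof
    fix x show "\<phi> x = (\<Sum>j<N. g j x)" unfolding g_def
      using layer_sum[OF a, of "\<phi> x" N] b[of x] Na by simp
  qed
  have int_g: "integral\<^sup>L KK (g j) \<le> a * measure KK (V j)" for j
  proof -
    have fin: "emeasure KK (V j) < \<infinity>"
      using KK_facts(2)[OF bV] by (simp add: om_def)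
    have ii: "integrable KK (indicator (V j) :: 'a \<Rightarrow> real)"
      using KK_facts(1) bV fin by (intro integrable_real_indicator) auto
    have "integral\<^sup>L KK (g j) \<le> integral\<^sup>L KK (\<lambda>x. a * indicator (V j) x)"
    proof (rule integral_mono[OF KK_int[OF cg]])
      show "integrable KK (\<lambda>x. a * indicator (V j) x)" using ii by simp
      fix x
      show "g j x \<le> a * indicator (V j) x"
      proof (cases "x \<in> V j")
        case True then show ?thesis unfolding g_def by simp
      next
        case False then show ?thesis unfolding g_def V_def by simp
      qed
    qed
    also have "\<dots> = a * measure KK (V j)" using fbm_space[OF KK_facts(3)] by simp
    finally show ?thesis .
  qed
  have L_g: "a * nu (V (Suc j)) \<le> L (g j)" for j
  proof -
    have "nu (V (Suc j)) \<le> L (g j) / a"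
    proof (rule nu_least)
      fix \<psi> assume ad: "adm (V (Suc j)) \<psi>"
      have cp: "cfun \<psi>" and bp: "\<And>x. 0 \<le> \<psi> x \<and> \<psi> x \<le> 1" and zp: "\<And>x. x \<notin> V (Suc j) \<Longrightarrow> \<psi> x = 0"
        using ad unfolding adm_def by auto
      have "L (\<lambda>x. a * \<psi> x) \<le> L (g j)"
      proof (rule Lmono[OF cfun_mult[OF cp] cg])
        fix x
        show "a * \<psi> x \<le> g j x"
        proof (cases "x \<in> V (Suc j)")
          case True
          then have "real (Suc j) * a < \<phi> x" unfolding V_def by simp
          then have "g j x = a" unfolding g_def by (simp add: algebra_simps)
          then show ?thesis using bp[of x] a by (simp add: mult_left_le)
        next
          case False
          then show ?thesis using zp[of x] a unfolding g_def by simp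
        qed
      qed
      then have "a * L \<psi> \<le> L (g j)" using Lscal[OF cp] by simp
      then show "L \<psi> \<le> L (g j) / a" using a by (simp add: field_simps)
    qed
    then show ?thesis using a by (simp add: field_simps)
  qed
  have "integral\<^sup>L KK \<phi> = (\<Sum>j<N. integral\<^sup>L KK (g j))"
    by (subst dec, rule Bochner_Integration.integral_sum) (rule KK_int[OF cg])
  also have "\<dots> \<le> (\<Sum>j<N. a * nu (V j))"
    using int_g KK_open[OF oV] by (intro sum_mono) simp
  finally have I1: "integral\<^sup>L KK \<phi> \<le> (\<Sum>j<N. a * nu (V j))" .
  have "L \<phi> = (\<Sum>j<N. L (g j))" by (subst dec, rule Lsum) (auto intro: cg)
  moreover have "(\<Sum>j<N. a * nu (V (Suc j))) \<le> (\<Sum>j<N. L (g j))"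
    using L_g by (intro sum_mono) simp
  ultimately have I2: "(\<Sum>j<N. a * nu (V (Suc j))) \<le> L \<phi>" by simp
  have "(\<Sum>j<N. a * nu (V j)) - (\<Sum>j<N. a * nu (V (Suc j))) = a * (\<Sum>j<N. nu (V j) - nu (V (Suc j)))"
    by (simp add: sum_subtractf sum_distrib_left algebra_simps)
  also have "(\<Sum>j<N. nu (V j) - nu (V (Suc j))) = nu (V 0) - nu (V N)"
    by (rule sum_lessThan_telescope')
  also have "\<dots> \<le> L (\<lambda>x. 1)" using nu_le1[of "V 0"] nu_nonneg[of "V N"] by simp
  finally have "(\<Sum>j<N. a * nu (V j)) - (\<Sum>j<N. a * nu (V (Suc j))) \<le> a * L (\<lambda>x. 1)"
    using a by (simp add: mult_left_mono)
  then show ?thesis using I1 I2 unfolding a_def by linarith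
qed

lemma int_le:
  assumes c: "cfun \<phi>"
  shows "integral\<^sup>L KK \<phi> \<le> L \<phi>"
proof -
  define s0 where "s0 = supnorm \<phi>"
  have s0: "0 \<le> s0" using supnorm_nonneg[OF cX c] s0_def by simp
  have bs: "\<bar>\<phi> x\<bar> \<le> s0" for x using cfun_bounded[OF cX c] s0_def by simp
  define M where "M = 2 * s0 + 1"
  have M: "M > 0" using s0 M_def by simp
  define \<psi> where "\<psi> = (\<lambda>x. \<phi> x + s0)"
  have cps: "cfun \<psi>" unfolding \<psi>_def using c by auto
  have bps: "0 \<le> \<psi> x \<and> \<psi> x \<le> M" for x using bs[of x] unfolding \<psi>_def M_def by (simp add: abs_le_iff)
  have spK: "space KK = UNIV" by (rule fbm_space[OF KK_facts(3)])
  have "integral\<^sup>L KK \<psi> \<le> L \<psi>"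
  proof (rule le_eps_mult[OF _ L1_nonneg])
    fix e :: real assume e: "e > 0"
    obtain N :: nat where N: "M / e < real N" using reals_Archimedean2 by blast
    have "0 < M / e" using M e by simp
    then have "0 < real N" using N by linarith
    then have N0: "N > 0" by simp
    have "M / real N < e" using N M e N0 by (simp add: field_simps)
    then have "(M / real N) * L (\<lambda>x. 1) \<le> e * L (\<lambda>x. 1)" using L1_nonneg by (intro mult_right_mono) auto
    moreover have "integral\<^sup>L KK \<psi> \<le> L \<psi> + (M / real N) * L (\<lambda>x. 1)"
      by (rule int_le_aux[OF cps bps M N0])
    ultimately show "integral\<^sup>L KK \<psi> \<le> L \<psi> + e * L (\<lambda>x. 1)" by linarith
  qed
  moreover have "integral\<^sup>L KK \<psi> = integral\<^sup>L KK \<phi> + s0 * L (\<lambda>x. 1)"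
  proof -
    have "integral\<^sup>L KK \<psi> = integral\<^sup>L KK \<phi> + integral\<^sup>L KK (\<lambda>x. s0)"
      unfolding \<psi>_def by (rule Bochner_Integration.integral_add[OF KK_int[OF c] KK_int[OF cfun_const]])
    also have "integral\<^sup>L KK (\<lambda>x. s0) = s0 * L (\<lambda>x. 1)" using spK KK_UNIV by simp
    finally show ?thesis .
  qed
  moreover have "L \<psi> = L \<phi> + s0 * L (\<lambda>x. 1)"
  proof -
    have "L \<psi> = L \<phi> + L (\<lambda>x. s0)" unfolding \<psi>_def by (rule Ladd[OF c cfun_const])
    also have "L (\<lambda>x. s0) = s0 * L (\<lambda>x. 1)" using Lscal[OF cfun_const[of 1], of s0] by simp
    finally show ?thesis .
  qed
  ultimately show ?thesis by simp
qed

theorem riesz_repr: "\<exists>K. fin_borel_measure K \<and> (\<forall>\<phi>. cfun \<phi> \<longrightarrow> integral\<^sup>L K \<phi> = L \<phi>)"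
proof (intro exI conjI allI impI)
  show "fin_borel_measure KK" by (rule KK_facts(3))
  fix \<phi> :: "'a \<Rightarrow> real" assume c: "cfun \<phi>"
  have c2: "cfun (\<lambda>x. - \<phi> x)" using c by auto
  have "integral\<^sup>L KK (\<lambda>x. - \<phi> x) \<le> L (\<lambda>x. - \<phi> x)" by (rule int_le[OF c2])
  moreover have "L (\<lambda>x. - \<phi> x) = - L \<phi>" using Lscal[OF c, of "-1"] by simp
  ultimately have "L \<phi> \<le> integral\<^sup>L KK \<phi>" by simp
  then show "integral\<^sup>L KK \<phi> = L \<phi>" using int_le[OF c] by simp
qed

end


lemma exists_good_measure:
  fixes \<mu> :: "('a::metric_space \<Rightarrow> real) \<Rightarrow> real" and h :: "'a \<Rightarrow> real"
  assumes cX: "compact (UNIV :: 'a set)" and sm: "SMp \<mu>" and hb: "\<And>x. \<bar>h x\<bar> \<le> s"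
  shows "\<exists>K. K \<in> Gset \<mu> \<and> qq \<mu> h \<le> qq (meas_sm K) h"
proof -
  define W where "W = {w. \<exists>\<psi> t. cfun \<psi> \<and> w = (\<lambda>x. \<psi> x + t * h x)}"
  have WI: "w \<in> W" if "cfun \<psi>" "\<And>x. w x = \<psi> x + t * h x" for w \<psi> t
  proof -
    have "w = (\<lambda>x. \<psi> x + t * h x)" using that(2) by (rule ext)
    then show ?thesis unfolding W_def using that(1) by blast
  qed
  have Wb: "\<exists>B. \<forall>x. \<bar>w x\<bar> \<le> B" if wW: "w \<in> W" for w
  proof -
    obtain \<psi> t where w: "cfun \<psi>" "w = (\<lambda>x. \<psi> x + t * h x)" using wW unfolding W_def by blast
    have "\<bar>w x\<bar> \<le> supnorm \<psi> + \<bar>t\<bar> * s" for x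
    proof -
      have 1: "\<bar>\<psi> x\<bar> \<le> supnorm \<psi>" by (rule cfun_bounded[OF cX w(1)])
      have "\<bar>t * h x\<bar> = \<bar>t\<bar> * \<bar>h x\<bar>" by (rule abs_mult)
      moreover have "\<bar>t\<bar> * \<bar>h x\<bar> \<le> \<bar>t\<bar> * s" by (rule mult_left_mono[OF hb abs_ge_zero])
      ultimately have 2: "\<bar>t * h x\<bar> \<le> \<bar>t\<bar> * s" by simp
      have "w x = \<psi> x + t * h x" using w(2) by simp
      then have 3: "\<bar>w x\<bar> \<le> \<bar>\<psi> x\<bar> + \<bar>t * h x\<bar>" using abs_triangle_ineq[of "\<psi> x" "t * h x"] by simp
      show ?thesis using 1 2 3 by linarith
    qed
    then show ?thesis by blast
  qed
  have Wc: "cfun \<psi> \<Longrightarrow> \<psi> \<in> W" for \<psi> by (rule WI[where w=\<psi> and \<psi>=\<psi> and t=0]) auto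
  have Wh: "h \<in> W" by (rule WI[where w=h and \<psi>="\<lambda>x. 0" and t=1]) auto
  interpret hb: hb_setup W "qq \<mu>"
  proof
    fix x y assume "x \<in> W" "y \<in> W"
    then obtain \<psi>1 t1 \<psi>2 t2 where "cfun \<psi>1" "x = (\<lambda>z. \<psi>1 z + t1 * h z)" "cfun \<psi>2" "y = (\<lambda>z. \<psi>2 z + t2 * h z)"
      unfolding W_def by blast
    then show "(\<lambda>t. x t + y t) \<in> W" by (intro WI[where \<psi>="\<lambda>z. \<psi>1 z + \<psi>2 z" and t="t1 + t2"]) (auto simp: algebra_simps)
  next
    fix x c assume "x \<in> W"
    then obtain \<psi>1 t1 where "cfun \<psi>1" "x = (\<lambda>z. \<psi>1 z + t1 * h z)" unfolding W_def by blast
    then show "(\<lambda>t. c * x t) \<in> W" by (intro WI[where \<psi>="\<lambda>z. c * \<psi>1 z" and t="c * t1"]) (auto simp: algebra_simps)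
  next
    fix x y assume xy: "x \<in> W" "y \<in> W"
    obtain B1 where B1: "\<forall>z. \<bar>x z\<bar> \<le> B1" using Wb[OF xy(1)] by blast
    obtain B2 where B2: "\<forall>z. \<bar>y z\<bar> \<le> B2" using Wb[OF xy(2)] by blast
    have "\<bar>x z\<bar> \<le> max B1 B2" "\<bar>y z\<bar> \<le> max B1 B2" for z
    proof -
      have "\<bar>x z\<bar> \<le> B1" "\<bar>y z\<bar> \<le> B2" using B1 B2 by blast+
      then show "\<bar>x z\<bar> \<le> max B1 B2" "\<bar>y z\<bar> \<le> max B1 B2" by (simp_all add: le_max_iff_disj)
    qed
    then show "qq \<mu> (\<lambda>t. x t + y t) \<le> qq \<mu> x + qq \<mu> y" by (intro qq_add[OF sm])
  next
    fix x c assume "x \<in> W" "(c::real) > 0"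
    moreover obtain B where "\<forall>z. \<bar>x z\<bar> \<le> B" using Wb[OF \<open>x \<in> W\<close>] by blast
    ultimately show "qq \<mu> (\<lambda>t. c * x t) = c * qq \<mu> x" using qq_hom_pos[OF sm, of c x B] by blast
  qed
  have q0: "qq \<mu> (\<lambda>x. 0) = 0" using qq_cont[OF sm cX, of "\<lambda>x. 0"] sm_zero[OF sm] by simp
  define G0 where "G0 = {((\<lambda>x. t * h x), t * qq \<mu> h) | t. True}"
  have G0I: "(w, v) \<in> G0" if "w = (\<lambda>x. t * h x)" "v = t * qq \<mu> h" for w v t
    unfolding G0_def using that by blast
  have dom0: "t * qq \<mu> h \<le> qq \<mu> (\<lambda>x. t * h x)" for t
  proof -
    consider "t = 0" | "t > 0" | "t < 0" by linarith
    then show ?thesis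
    proof cases
      case 1 then show ?thesis using q0 by simp
    next
      case 2 then show ?thesis using qq_hom_pos[OF sm 2 hb] by simp
    next
      case 3
      have "qq \<mu> (\<lambda>x. t * h x + (- t) * h x) \<le> qq \<mu> (\<lambda>x. t * h x) + qq \<mu> (\<lambda>x. (- t) * h x)"
      proof (rule qq_add[OF sm])
        show "\<bar>t * h x\<bar> \<le> \<bar>t\<bar> * s" "\<bar>- t * h x\<bar> \<le> \<bar>t\<bar> * s" for x
          using mult_left_mono[OF hb[of x] abs_ge_zero[of t]] by (simp_all add: abs_mult)
      qed
      moreover have "qq \<mu> (\<lambda>x. (- t) * h x) = (- t) * qq \<mu> h" using 3 by (intro qq_hom_pos[OF sm _ hb]) simp
      ultimately show ?thesis using q0 by simp
    qed
  qed
  have lg0: "lin_graph W (qq \<mu>) G0"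
    unfolding lin_graph_def
  proof (intro conjI allI impI)
    show "G0 \<noteq> {}" unfolding G0_def by blast
  next
    fix x a assume "(x, a) \<in> G0"
    then obtain t where t: "x = (\<lambda>x. t * h x)" "a = t * qq \<mu> h" unfolding G0_def by blast
    show "x \<in> W" using t by (intro WI[where w=x and \<psi>="\<lambda>x. 0" and t=t]) auto
    show "a \<le> qq \<mu> x" using t dom0 by simp
  next
    fix x a y b assume "(x, a) \<in> G0" "(y, b) \<in> G0"
    then obtain t1 t2 where "x = (\<lambda>x. t1 * h x)" "a = t1 * qq \<mu> h" "y = (\<lambda>x. t2 * h x)" "b = t2 * qq \<mu> h"
      unfolding G0_def by blast
    then show "((\<lambda>t. x t + y t), a + b) \<in> G0" by (intro G0I[of _ "t1 + t2"]) (auto simp: algebra_simps)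
  next
    fix x a c assume "(x, a) \<in> G0"
    then obtain t1 where "x = (\<lambda>x. t1 * h x)" "a = t1 * qq \<mu> h" unfolding G0_def by blast
    then show "((\<lambda>t. c * x t), c * a) \<in> G0" by (intro G0I[of _ "c * t1"]) (auto simp: algebra_simps)
  next
    fix x a b assume "(x, a) \<in> G0" "(x, b) \<in> G0"
    then obtain t1 t2 where e: "x = (\<lambda>x. t1 * h x)" "a = t1 * qq \<mu> h" "x = (\<lambda>x. t2 * h x)" "b = t2 * qq \<mu> h"
      unfolding G0_def by blast
    show "a = b"
    proof (cases "t1 = t2")
      case True then show ?thesis using e by simp
    next
      case False
      have "t1 * h z = t2 * h z" for z using e(1) e(3) by metis
      then have "h z = 0" for z using False by simp
      then have "h = (\<lambda>x. 0)" by auto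
      then show ?thesis using e q0 by simp
    qed
  qed
  obtain L where Lp: "\<forall>x\<in>W. L x \<le> qq \<mu> x" and La: "\<forall>x\<in>W. \<forall>y\<in>W. L (\<lambda>t. x t + y t) = L x + L y"
    and Ls: "\<forall>x\<in>W. \<forall>c. L (\<lambda>t. c * x t) = c * L x" and L0: "\<forall>x a. (x, a) \<in> G0 \<longrightarrow> L x = a"
    using hb.HB[OF lg0] by blast
  have Lh: "L h = qq \<mu> h" using L0 G0I[of h 1] by simp
  have qle0: "qq \<mu> w \<le> 0" if w1: "\<And>x. w x \<le> 0" and w2: "\<And>x. \<bar>w x\<bar> \<le> B" for w B
  proof -
    have "- B \<le> w x" for x using w2[of x] by linarith
    then show ?thesis using qq_le[OF sm cfun_const[of 0], of w B] w1 sm_zero[OF sm] by simp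
  qed
  have Lpos: "0 \<le> L f" if f: "cfun f" "\<And>x. 0 \<le> f x" for f
  proof -
    have "L (\<lambda>x. (-1) * f x) \<le> qq \<mu> (\<lambda>x. (-1) * f x)" using Lp Wc[OF f(1)] hb.W_scal by blast
    also have "\<dots> \<le> 0" using f cfun_bounded[OF cX f(1)] by (intro qle0[of _ "supnorm f"]) auto
    moreover have "L (\<lambda>x. (-1) * f x) = (-1) * L f" using Ls Wc[OF f(1)] by blast
    ultimately show ?thesis by simp
  qed
  interpret R: riesz L
  proof
    show "compact (UNIV :: 'a set)" by (rule cX)
    show "\<And>f g. cfun f \<Longrightarrow> cfun g \<Longrightarrow> L (\<lambda>x. f x + g x) = L f + L g" using La Wc by blast
    show "\<And>f c. cfun f \<Longrightarrow> L (\<lambda>x. c * f x) = c * L f" using Ls Wc by blast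
    show "\<And>f. cfun f \<Longrightarrow> (\<And>x. 0 \<le> f x) \<Longrightarrow> 0 \<le> L f" by (rule Lpos)
  qed
  obtain K where K: "fin_borel_measure K" "\<And>\<phi>. cfun \<phi> \<Longrightarrow> integral\<^sup>L K \<phi> = L \<phi>"
    using R.riesz_repr by blast
  have KG: "K \<in> Gset \<mu>"
    unfolding Gset_def sm_le_def meas_sm_def
  proof (intro CollectI conjI allI impI K(1))
    fix \<psi> :: "'a \<Rightarrow> real" assume c: "cfun \<psi>"
    have "L \<psi> \<le> qq \<mu> \<psi>" using Lp Wc[OF c] by blast
    then show "integral\<^sup>L K \<psi> \<le> \<mu> \<psi>" using K(2)[OF c] qq_cont[OF sm cX c] by simp
  qed
  have "qq \<mu> h \<le> qq (meas_sm K) h"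
  proof (rule qq_ge[of _ s])
    show "h x \<le> s" for x using hb[of x] by linarith
    fix \<psi> assume ps: "cfun \<psi>" "\<forall>x. h x \<le> \<psi> x"
    define d where "d = (\<lambda>x. \<psi> x + (-1) * h x)"
    have dW: "d \<in> W" unfolding d_def by (rule WI[where \<psi>=\<psi> and t="-1", OF ps(1)]) simp
    have md: "(\<lambda>x. (-1) * d x) \<in> W" by (rule hb.W_scal[OF dW])
    have "L (\<lambda>x. (-1) * d x) \<le> qq \<mu> (\<lambda>x. (-1) * d x)" using Lp md by blast
    also have "\<dots> \<le> 0"
    proof -
      obtain B where "\<forall>x. \<bar>(-1) * d x\<bar> \<le> B" using Wb[OF md] by blast
      then show ?thesis using ps(2) by (intro qle0[of _ B]) (auto simp: d_def)
    qed
    finally have "L (\<lambda>x. (-1) * d x) \<le> 0" .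
    moreover have "L (\<lambda>x. (-1) * d x) = (-1) * L d" using Ls dW by blast
    ultimately have d0: "0 \<le> L d" by simp
    have "L \<psi> = L (\<lambda>x. d x + h x)"
    proof -
      have "(\<lambda>x. d x + h x) = \<psi>" by (auto simp: d_def)
      then show ?thesis by simp
    qed
    also have "\<dots> = L d + L h" using La dW Wh by blast
    finally have "L h \<le> L \<psi>" using d0 by simp
    then show "qq \<mu> h \<le> meas_sm K \<psi>" using Lh K(2)[OF ps(1)] by (simp add: meas_sm_def)
  qed
  then show ?thesis using KG by blast
qed

lemma part5:
  fixes D :: "'a::metric_space set" and f :: "'a \<Rightarrow> 'b::metric_space"
  assumes cX: "compact (UNIV :: 'a set)" and cY: "compact (UNIV :: 'b set)"
    and odf: "od_map D f" and sm: "SMp \<mu>" and c: "cfun \<phi>"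
  shows "pushforward D f \<mu> \<phi> = (SUP K\<in>Gset \<mu>. pushforward D f (meas_sm K) \<phi>)"
proof -
  have dense: "closure D = UNIV" using odf by (rule od_dense)
  define h where "h = pullback D f \<phi>"
  define s where "s = supnorm \<phi>"
  have hb: "\<bar>h x\<bar> \<le> s" for x unfolding h_def s_def by (rule pb_bnd[OF dense cY c])
  obtain K0 where K0: "K0 \<in> Gset \<mu>" "qq \<mu> h \<le> qq (meas_sm K0) h"
    using exists_good_measure[where h=h and s=s, OF cX sm hb] by blast
  have up: "qq (meas_sm K) h \<le> qq \<mu> h" if K: "K \<in> Gset \<mu>" for K
  proof -
    have "fin_borel_measure K \<and> sm_le (meas_sm K) \<mu>" using K unfolding Gset_def by simp
    then have fK: "fin_borel_measure K" and le: "sm_le (meas_sm K) \<mu>" by auto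
    have smK: "SMp (meas_sm K)" by (rule meas_SMp[OF cX fK])
    show ?thesis
    proof (rule qq_ge[of _ s])
      show "h x \<le> s" for x using hb[of x] by linarith
      fix \<psi> assume ps: "cfun \<psi>" "\<forall>x. h x \<le> \<psi> x"
      have lb: "- s \<le> h x" for x using hb[of x] by linarith
      have "qq (meas_sm K) h \<le> meas_sm K \<psi>" by (rule qq_le[OF smK ps(1), of h s]) (use ps lb in auto)
      also have "\<dots> \<le> \<mu> \<psi>" using le ps(1) unfolding sm_le_def by simp
      finally show "qq (meas_sm K) h \<le> \<mu> \<psi>" .
    qed
  qed
  have eq0: "qq (meas_sm K0) h = qq \<mu> h" using up[OF K0(1)] K0(2) by simp
  have "(SUP K\<in>Gset \<mu>. qq (meas_sm K) h) = qq \<mu> h"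
  proof (rule cSup_eq_maximum)
    show "qq \<mu> h \<in> (\<lambda>K. qq (meas_sm K) h) ` Gset \<mu>" by (rule image_eqI[where f="\<lambda>K. qq (meas_sm K) h", OF eq0[symmetric] K0(1)])
    fix y assume "y \<in> (\<lambda>K. qq (meas_sm K) h) ` Gset \<mu>"
    then obtain K where "K \<in> Gset \<mu>" "y = qq (meas_sm K) h" by blast
    then show "y \<le> qq \<mu> h" using up by simp
  qed
  then show ?thesis unfolding pf_qq h_def by simp
qed

theorem theorem2p10:
  fixes D :: "'a::metric_space set" and f :: "'a \<Rightarrow> 'b::metric_space"
  assumes cX: "compact (UNIV :: 'a set)"
    and cY: "compact (UNIV :: 'b set)"
    and cZ: "compact (UNIV :: 'c::metric_space set)"
    and odf: "od_map D f"
  shows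
   "(\<forall>\<mu>. SMp \<mu> \<longrightarrow>
        SMp (pushforward D f \<mu>) \<and>
        pushforward D f \<mu> (\<lambda>_. 1) = \<mu> (\<lambda>_. 1) \<and>
        pushforward D f \<mu> (\<lambda>_. -1) = \<mu> (\<lambda>_. -1) \<and>
        smnorm (pushforward D f \<mu>) = smnorm \<mu>)
    \<and>
    (\<forall>(D2 :: 'b set) (g :: 'b \<Rightarrow> 'c) U. od_map D2 g \<and> open U \<and> closure U = UNIV \<and> U \<subseteq> D \<and> f ` U \<subseteq> D2 \<longrightarrow>
        (\<forall>\<mu>. SMp \<mu> \<longrightarrow> sm_le (pushforward U (g \<circ> f) \<mu>) (pushforward D2 g (pushforward D f \<mu>))) \<and>
        (D = UNIV \<and> D2 = UNIV \<longrightarrow>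
           (\<forall>\<mu>. SMp \<mu> \<longrightarrow> (\<forall>\<phi>. cfun \<phi> \<longrightarrow>
              pushforward D2 g (pushforward D f \<mu>) \<phi> = pushforward U (g \<circ> f) \<mu> \<phi>))))
    \<and>
    (\<forall>\<mu>s \<mu>. (\<forall>n. SMp (\<mu>s n)) \<and> sm_weak_conv \<mu>s \<mu> \<longrightarrow>
        (\<forall>\<nu>. weak_cluster_point (\<lambda>n. pushforward D f (\<mu>s n)) \<nu> \<longrightarrow> sm_le \<nu> (pushforward D f \<mu>)) \<and>
        (D = UNIV \<longrightarrow> sm_weak_conv (\<lambda>n. pushforward D f (\<mu>s n)) (pushforward D f \<mu>)))
    \<and>
    (\<forall>M. fin_borel_measure M \<and> emeasure M (UNIV - D) = 0 \<longrightarrow>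
        (\<forall>\<phi>. cfun \<phi> \<longrightarrow> pushforward D f (meas_sm M) \<phi> = (LINT x:D|M. \<phi> (f x))))
    \<and>
    (\<forall>\<mu>. SMp \<mu> \<longrightarrow>
        (\<forall>\<phi>. cfun \<phi> \<longrightarrow> pushforward D f \<mu> \<phi> = (SUP K\<in>Gset \<mu>. pushforward D f (meas_sm K) \<phi>)))
    \<and>
    (\<forall>\<mu>1 \<mu>2. SMp \<mu>1 \<and> SMp \<mu>2 \<longrightarrow>
        sm_le (\<lambda>\<phi>. pushforward D f \<mu>1 \<phi> + pushforward D f \<mu>2 \<phi>)
              (pushforward D f (\<lambda>\<phi>. \<mu>1 \<phi> + \<mu>2 \<phi>)))"
proof (intro conjI allI impI; (elim conjE)?)
  fix \<mu> :: "('a \<Rightarrow> real) \<Rightarrow> real" assume sm: "SMp \<mu>"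
  show "SMp (pushforward D f \<mu>)" "pushforward D f \<mu> (\<lambda>_. 1) = \<mu> (\<lambda>_. 1)"
    "pushforward D f \<mu> (\<lambda>_. -1) = \<mu> (\<lambda>_. -1)" "smnorm (pushforward D f \<mu>) = smnorm \<mu>"
    using part1[OF cX cY odf sm] by auto
next
  fix D2 :: "'b set" and g :: "'b \<Rightarrow> 'c" and U :: "'a set" and \<mu> :: "('a \<Rightarrow> real) \<Rightarrow> real"
  assume odg: "od_map D2 g" and oU: "open U" and dU: "closure U = UNIV" and UD: "U \<subseteq> D"
    and fU: "f ` U \<subseteq> D2" and sm: "SMp \<mu>"
  show "sm_le (pushforward U (g \<circ> f) \<mu>) (pushforward D2 g (pushforward D f \<mu>))"
    by (rule part2_le[OF cX cY cZ odf odg dU UD fU sm])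
next
  fix D2 :: "'b set" and g :: "'b \<Rightarrow> 'c" and U :: "'a set" and \<mu> :: "('a \<Rightarrow> real) \<Rightarrow> real" and \<phi> :: "'c \<Rightarrow> real"
  assume odg: "od_map D2 g" and oU: "open U" and dU: "closure U = UNIV" and UD: "U \<subseteq> D"
    and fU: "f ` U \<subseteq> D2" and DU: "D = UNIV" and D2U: "D2 = UNIV" and sm: "SMp \<mu>" and c: "cfun \<phi>"
  show "pushforward D2 g (pushforward D f \<mu>) \<phi> = pushforward U (g \<circ> f) \<mu> \<phi>"
    using part2_eq[OF cX cY cZ _ _ dU sm c, of f g] odf odg DU D2U by simp
next
  fix \<mu>s :: "nat \<Rightarrow> ('a \<Rightarrow> real) \<Rightarrow> real" and \<mu> :: "('a \<Rightarrow> real) \<Rightarrow> real" assume sms: "\<forall>n. SMp (\<mu>s n)" and wc: "sm_weak_conv \<mu>s \<mu>"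
  note p3 = part3[OF cX cY odf sms wc]
  show "\<And>\<nu>. weak_cluster_point (\<lambda>n. pushforward D f (\<mu>s n)) \<nu> \<Longrightarrow> sm_le \<nu> (pushforward D f \<mu>)"
    using p3 by blast
  show "D = UNIV \<Longrightarrow> sm_weak_conv (\<lambda>n. pushforward D f (\<mu>s n)) (pushforward D f \<mu>)"
    using p3 by blast
next
  fix M :: "'a measure" and \<phi> :: "'b \<Rightarrow> real" assume "fin_borel_measure M" "emeasure M (UNIV - D) = 0" "cfun \<phi>"
  then show "pushforward D f (meas_sm M) \<phi> = (LINT x:D|M. \<phi> (f x))"
    by (intro part4[OF cX cY odf])
next
  fix \<mu> :: "('a \<Rightarrow> real) \<Rightarrow> real" and \<phi> :: "'b \<Rightarrow> real" assume "SMp \<mu>" "cfun \<phi>"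
  then show "pushforward D f \<mu> \<phi> = (SUP K\<in>Gset \<mu>. pushforward D f (meas_sm K) \<phi>)"
    by (intro part5[OF cX cY odf])
next
  fix \<mu>1 \<mu>2 :: "('a \<Rightarrow> real) \<Rightarrow> real" assume "SMp \<mu>1" "SMp \<mu>2"
  then show "sm_le (\<lambda>\<phi>. pushforward D f \<mu>1 \<phi> + pushforward D f \<mu>2 \<phi>) (pushforward D f (\<lambda>\<phi>. \<mu>1 \<phi> + \<mu>2 \<phi>))"
    by (intro part6[OF cY odf])
qed


end
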